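(* Let $w\geqslant 2$ and $h\geqslant1$ be integers, $\underline h=2^{\lfloor\log_2 h\rfloor}$, $\overline h=2^{\lceil\log_2 h\rceil}$, and let $\mathcal{H}_{h,w}$ be the set of fast Hough transform patterns on the $h\times w$ image. Then for $L\in\{\mathrm{OR},\mathrm{SUM}\}$, $$\log_3 8\; w\,\underline h\log_2\underline h\;\leqslant\; L(\mathcal{H}_{h,w})\;\leqslant\; 2\,w\,\overline h\log_2\overline h,$$ and $$\log_9 8\; w\,\underline h\log_2\underline h\;\leqslant\; L2(\mathcal{H}_{h,w})\;\leqslant\; w\,\overline h\log_2\overline h,$$ where $L2$ denotes $\mathrm{OR2}$ if $L=\mathrm{OR}$ and $\mathrm{SUM2}$ if $L=\mathrm{SUM}$.
   Context: Image: for integers $h\geqslant1$ (height) and $w\geqslant2$ (width), an image is the set $I$ of $wh$ pixel variables $p_{ij}$, $i=0,\dots,h-1$ (row index, counted from the bottom), $j=0,\dots,w-1$ (column index). A pattern is a nonempty subset of $I$; a pattern set $\mathcal{T}=\{T_k\}_{k=1}^m$ is a nonempty set of $m$ distinct patterns. Computing $\mathcal{T}$ means computing simultaneously $y_k=\sum_{p\in T_k}p$, $k=1,\dots,m$, where the "sum" is a commutative semigroup operation on pixel values. Circuits: a circuit is a directed acyclic graph with $wh$ input nodes $p_{ij}$ of fanin zero and $m$ output nodes $y_k$ of fanout zero; every node of nonzero fanin (a gate) may have any positive number of incoming edges and computes the semigroup sum of the values of its in-neighbours. The size of a circuit is its number of edges. A circuit computes $\mathcal{T}$ if, for every assignment of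 values to the inputs, output $y_k$ equals $\sum_{p\in T_k}p$ for all $k$. $\mathrm{OR}(\mathcal{T})$ (resp. $\mathrm{SUM}(\mathcal{T})$) is the minimal size of a circuit computing $\mathcal{T}$ over the semigroup $(\{0,1\},\vee)$ (resp. $(\mathbb{N},+)$ with $\mathbb{N}=\{0,1,2,\dots\}$). $\mathrm{OR2}(\mathcal{T})$ (resp. $\mathrm{SUM2}(\mathcal{T})$) is the minimal number of gates among circuits computing $\mathcal{T}$ over $(\{0,1\},\vee)$ (resp. $(\mathbb{N},+)$) in which every node has fanin at most $2$. FHT patterns: for a pattern $T$ containing exactly one pixel in each of its rows, let $\Delta(T)=(j_{top}-j_{bot})\bmod w$, where $j_{top},j_{bot}$ are the column indices of the topmost and bottommost pixels of $T$, and let $\mathit{tran}_{a,b}(T)=\{p_{i+a,\,(j+b)\bmod w}\mid p_{ij}\in T\}$. For $h=2^d$ define $\mathcal{H}_0=\{\{p_{00}\},\{p_{01}\},\dots,\{p_{0,w-1}\}\}$ and, for $k=1,\dots,d$, $\mathcal{H}_k=\{T\cup\mathit{tran}_{2^{k-1},\,\Delta(T)+s}(T)\mid T\in\mathcal{H}_{k-1},\ s\in\{0,1\}\}$; set $\mathcal{H}_{h,w}=\mathcal{H}_d$. For arbitrary $h\geqslant1$, view the $h\times w$ image $I$ as the bottom $h$ rows of the $\overline h\times w$ image and set $\mathcal{H}_{h,w}=\{T\cap I\mid T\in\mathcal{H}_{\overline h,w}\}$. *)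

theory Defs
  imports Complex_Main
begin

type_synonym pixel = "nat \<times> nat"   (* (row i, column j), rows counted from the bottom *)

definition img :: "nat \<Rightarrow> nat \<Rightarrow> pixel set" where
  "img h w = {(i, j). i < h \<and> j < w}"

definition col_at :: "pixel set \<Rightarrow> nat \<Rightarrow> nat" where
  "col_at T i = (THE j. (i, j) \<in> T)"

definition Delta :: "nat \<Rightarrow> pixel set \<Rightarrow> nat" where
  "Delta w T = nat ((int (col_at T (Max (fst ` T))) - int (col_at T (Min (fst ` T)))) mod int w)"

definition tran :: "nat \<Rightarrow> nat \<Rightarrow> nat \<Rightarrow> pixel set \<Rightarrow> pixel set" where
  "tran w a b T = (\<lambda>(i, j). (i + a, (j + b) mod w)) ` T"

fun FHT_level :: "nat \<Rightarrow> nat \<Rightarrow> pixel set set" where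
  "FHT_level w 0 = {{(0, j)} | j. j < w}"
| "FHT_level w (Suc k) =
     {T \<union> tran w (2 ^ k) (Delta w T + s) T | T s. T \<in> FHT_level w k \<and> s \<in> {0, 1}}"

definition h_up :: "nat \<Rightarrow> nat" where
  "h_up h = 2 ^ nat \<lceil>log 2 (real h)\<rceil>"

definition h_low :: "nat \<Rightarrow> nat" where
  "h_low h = 2 ^ nat \<lfloor>log 2 (real h)\<rfloor>"

(* H_{h,w}: FHT patterns of the h_up x w image, restricted to the bottom h rows *)
definition FHT :: "nat \<Rightarrow> nat \<Rightarrow> pixel set set" where
  "FHT h w = {T \<inter> img h w | T. T \<in> FHT_level w (nat \<lceil>log 2 (real h)\<rceil>)}"

(* Circuits: node set V (nodes are naturals), edge set E, input node of each pixel,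
   output node of each pattern. *)
definition preds :: "(nat \<times> nat) set \<Rightarrow> nat \<Rightarrow> nat set" where
  "preds E v = {u. (u, v) \<in> E}"

definition is_circuit ::
  "pixel set \<Rightarrow> pixel set set \<Rightarrow> nat set \<Rightarrow> (nat \<times> nat) set \<Rightarrow> (pixel \<Rightarrow> nat) \<Rightarrow> (pixel set \<Rightarrow> nat) \<Rightarrow> bool" where
  "is_circuit I \<T> V E inp out \<longleftrightarrow>
     finite V \<and> E \<subseteq> V \<times> V \<and> (\<forall>v. (v, v) \<notin> E\<^sup>+) \<and>
     inj_on inp I \<and> inp ` I \<subseteq> V \<and> (\<forall>p\<in>I. preds E (inp p) = {}) \<and>
     (\<forall>v\<in>V. preds E v = {} \<longrightarrow> v \<in> inp ` I) \<and>
     inj_on out \<T> \<and> out ` \<T> \<subseteq> V \<and> (\<forall>T\<in>\<T>. \<forall>u. (out T, u) \<notin> E)"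

definition computes_SUM ::
  "pixel set \<Rightarrow> pixel set set \<Rightarrow> nat set \<Rightarrow> (nat \<times> nat) set \<Rightarrow> (pixel \<Rightarrow> nat) \<Rightarrow> (pixel set \<Rightarrow> nat) \<Rightarrow> bool" where
  "computes_SUM I \<T> V E inp out \<longleftrightarrow>
     (\<forall>x :: pixel \<Rightarrow> nat. \<exists>val :: nat \<Rightarrow> nat.
        (\<forall>p\<in>I. val (inp p) = x p) \<and>
        (\<forall>v\<in>V. preds E v \<noteq> {} \<longrightarrow> val v = (\<Sum>u\<in>preds E v. val u)) \<and>
        (\<forall>T\<in>\<T>. val (out T) = (\<Sum>p\<in>T. x p)))"

definition computes_OR ::
  "pixel set \<Rightarrow> pixel set set \<Rightarrow> nat set \<Rightarrow> (nat \<times> nat) set \<Rightarrow> (pixel \<Rightarrow> nat) \<Rightarrow> (pixel set \<Rightarrow> nat) \<Rightarrow> bool" where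
  "computes_OR I \<T> V E inp out \<longleftrightarrow>
     (\<forall>x :: pixel \<Rightarrow> bool. \<exists>val :: nat \<Rightarrow> bool.
        (\<forall>p\<in>I. val (inp p) = x p) \<and>
        (\<forall>v\<in>V. preds E v \<noteq> {} \<longrightarrow> val v = (\<exists>u\<in>preds E v. val u)) \<and>
        (\<forall>T\<in>\<T>. val (out T) = (\<exists>p\<in>T. x p)))"

definition gates :: "nat set \<Rightarrow> (nat \<times> nat) set \<Rightarrow> nat set" where
  "gates V E = {v\<in>V. preds E v \<noteq> {}}"

definition fanin2 :: "(nat \<times> nat) set \<Rightarrow> bool" where
  "fanin2 E \<longleftrightarrow> (\<forall>v. card (preds E v) \<le> 2)"

definition OR_cx :: "pixel set \<Rightarrow> pixel set set \<Rightarrow> nat" where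
  "OR_cx I \<T> = (LEAST n. \<exists>V E inp out. is_circuit I \<T> V E inp out \<and> computes_OR I \<T> V E inp out \<and> card E = n)"

definition SUM_cx :: "pixel set \<Rightarrow> pixel set set \<Rightarrow> nat" where
  "SUM_cx I \<T> = (LEAST n. \<exists>V E inp out. is_circuit I \<T> V E inp out \<and> computes_SUM I \<T> V E inp out \<and> card E = n)"

definition OR2_cx :: "pixel set \<Rightarrow> pixel set set \<Rightarrow> nat" where
  "OR2_cx I \<T> = (LEAST n. \<exists>V E inp out. is_circuit I \<T> V E inp out \<and> fanin2 E \<and> computes_OR I \<T> V E inp out \<and> card (gates V E) = n)"

definition SUM2_cx :: "pixel set \<Rightarrow> pixel set set \<Rightarrow> nat" where
  "SUM2_cx I \<T> = (LEAST n. \<exists>V E inp out. is_circuit I \<T> V E inp out \<and> fanin2 E \<and> computes_SUM I \<T> V E inp out \<and> card (gates V E) = n)"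

end

theory Submission
  imports Defs
begin

abbreviation L where "L \<equiv> FHT_level"

definition is_pat :: "nat \<Rightarrow> nat \<Rightarrow> pixel set \<Rightarrow> bool" where
  "is_pat n w P \<longleftrightarrow> P \<subseteq> {..<n} \<times> {..<w} \<and> (\<forall>i<n. \<exists>!j. (i,j) \<in> P)"

definition U :: "nat \<Rightarrow> nat \<Rightarrow> pixel set \<Rightarrow> nat \<Rightarrow> pixel set" where
  "U w k Q s = Q \<union> tran w (2^k) (Delta w Q + s) Q"

lemma L_Suc: "L w (Suc k) = (\<lambda>(Q,s). U w k Q s) ` (L w k \<times> {0,1})"
  by (auto simp: U_def image_iff)

lemma tran_mem: "(i,j) \<in> tran w a b P \<longleftrightarrow> a \<le> i \<and> (\<exists>j'. (i-a, j') \<in> P \<and> j = (j'+b) mod w)"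
  unfolding tran_def by (force simp: image_iff)

lemma is_pat_col:
  assumes "is_pat n w P" "i < n"
  shows "(i, col_at P i) \<in> P" "col_at P i < w"
proof -
  from assms obtain j where "(i,j) \<in> P" "\<forall>j'. (i,j') \<in> P \<longrightarrow> j' = j" unfolding is_pat_def by blast
  then have "col_at P i = j" unfolding col_at_def by blast
  then show "(i, col_at P i) \<in> P" using \<open>(i,j) \<in> P\<close> by simp
  then show "col_at P i < w" using assms unfolding is_pat_def by blast
qed

lemma is_pat_mem:
  assumes "is_pat n w P" "(i,j) \<in> P"
  shows "i < n" "j < w" "col_at P i = j"
proof -
  show "i < n" "j < w" using assms unfolding is_pat_def by auto
  then show "col_at P i = j" using assms is_pat_col[OF assms(1), of i] unfolding is_pat_def by blast
qed

lemma is_pat_eq: "is_pat n w P \<Longrightarrow> P = {(i, col_at P i) | i. i < n}"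
proof (intro equalityI subsetI)
  fix x assume a: "is_pat n w P" "x \<in> P"
  obtain i j where x: "x = (i,j)" by (cases x)
  show "x \<in> {(i, col_at P i) | i. i < n}" using is_pat_mem[OF a(1), of i j] a(2) x by auto
next
  fix x assume a: "is_pat n w P" "x \<in> {(i, col_at P i) | i. i < n}"
  then show "x \<in> P" using is_pat_col(1)[OF a(1)] by auto
qed

lemma is_pat_fst: "is_pat n w P \<Longrightarrow> fst ` P = {..<n}"
proof -
  assume a: "is_pat n w P"
  have "fst ` {(i, col_at P i) | i. i < n} = {..<n}" by (auto simp: image_iff)
  then show ?thesis using is_pat_eq[OF a] by simp
qed

lemma is_pat_card: "is_pat n w P \<Longrightarrow> card P = n"
proof -
  assume a: "is_pat n w P"
  have "P = (\<lambda>i. (i, col_at P i)) ` {..<n}" using is_pat_eq[OF a] by auto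
  moreover have "inj_on (\<lambda>i. (i, col_at P i)) {..<n}" by (auto simp: inj_on_def)
  ultimately show ?thesis by (metis card_image card_lessThan)
qed

lemma is_pat_finite: "is_pat n w P \<Longrightarrow> finite P"
  unfolding is_pat_def by (meson finite_SigmaI finite_lessThan finite_subset)

lemma Delta_pat:
  assumes "is_pat n w P" "n \<ge> 1"
  shows "Delta w P = nat ((int (col_at P (n-1)) - int (col_at P 0)) mod int w)"
proof -
  have f: "fst ` P = {..<n}" by (rule is_pat_fst[OF assms(1)])
  have mx: "Max {..<n} = n - 1" using assms(2)
    by (intro Max_eqI) auto
  have mn: "Min {..<n} = (0::nat)" using assms(2)
    by (intro Min_eqI) auto
  show ?thesis unfolding Delta_def f mx mn by (rule refl)
qed


declare FHT_level.simps(2)[simp del]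

lemma mod_s_eq:
  assumes "(a + s) mod w = (a + s') mod (w::nat)" "s \<in> {0,1}" "s' \<in> {0,1}" "w \<ge> 2"
  shows "s = s'"
proof (rule ccontr)
  assume "s \<noteq> s'"
  then have "a mod w = Suc a mod w" using assms by auto
  then show False using assms(4) by (simp add: mod_Suc split: if_splits)
qed

lemma tran0_mem: "(i,j) \<in> tran w 0 c P \<longleftrightarrow> (\<exists>j'. (i,j') \<in> P \<and> j = (j'+c) mod w)"
  by (simp add: tran_mem)

lemma tran_comm: "tran w 0 c (tran w a b P) = tran w a b (tran w 0 c P)"
  unfolding tran_def image_comp
proof (rule image_cong)
  fix x assume "x \<in> P"
  obtain i j where x: "x = (i,j)" by (cases x)
  have "((j+b) mod w + c) mod w = ((j+c) mod w + b) mod w"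
    by (metis mod_add_left_eq add.commute add.left_commute)
  then show "((\<lambda>(i, j). (i + 0, (j + c) mod w)) \<circ> (\<lambda>(i, j). (i + a, (j + b) mod w))) x =
         ((\<lambda>(i, j). (i + a, (j + b) mod w)) \<circ> (\<lambda>(i, j). (i + 0, (j + c) mod w))) x"
    using x by simp
qed simp

lemma tran_Un: "tran w a b (A \<union> B) = tran w a b A \<union> tran w a b B"
  unfolding tran_def by (rule image_Un)

lemma mod_inj_lt:
  assumes "(j + c) mod w = (j' + c) mod w" "j < w" "j' < (w::nat)"
  shows "j = j'"
proof (rule ccontr)
  assume ne: "j \<noteq> j'"
  have "(int j + int c) mod int w = (int j' + int c) mod int w" using assms(1) by (metis of_nat_add zmod_int)
  then have "int w dvd (int j + int c) - (int j' + int c)" by (simp add: mod_eq_dvd_iff)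
  then have d: "int w dvd int j - int j'" by simp
  have "int j - int j' \<noteq> 0" using ne by simp
  from dvd_imp_le_int[OF this d] have "\<bar>int w\<bar> \<le> \<bar>int j - int j'\<bar>" .
  then show False using assms(2,3) by linarith
qed

lemma tran0_inj:
  assumes "P \<subseteq> UNIV \<times> {..<w}" "P' \<subseteq> UNIV \<times> {..<w}" "tran w 0 c P = tran w 0 c P'"
  shows "P = P'"
proof -
  have "(i,j) \<in> P'" if "(i,j) \<in> P" for i j
  proof -
    have "(i, (j+c) mod w) \<in> tran w 0 c P" using that by (auto simp: tran0_mem)
    then have "(i, (j+c) mod w) \<in> tran w 0 c P'" using assms(3) by simp
    then obtain j' where "(i,j') \<in> P'" "(j+c) mod w = (j'+c) mod w" by (auto simp: tran0_mem)
    moreover have "j < w" "j' < w" using assms that \<open>(i,j') \<in> P'\<close> by auto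
    ultimately show ?thesis using mod_inj_lt by blast
  qed
  moreover have "(i,j) \<in> P" if "(i,j) \<in> P'" for i j
  proof -
    have "(i, (j+c) mod w) \<in> tran w 0 c P'" using that by (auto simp: tran0_mem)
    then have "(i, (j+c) mod w) \<in> tran w 0 c P" using assms(3) by simp
    then obtain j' where "(i,j') \<in> P" "(j+c) mod w = (j'+c) mod w" by (auto simp: tran0_mem)
    moreover have "j < w" "j' < w" using assms that \<open>(i,j') \<in> P\<close> by auto
    ultimately show ?thesis using mod_inj_lt by blast
  qed
  ultimately show ?thesis by auto
qed

lemma is_pat_tran0:
  assumes "is_pat n w P" "w > 0"
  shows "is_pat n w (tran w 0 c P)" "\<And>i. i < n \<Longrightarrow> col_at (tran w 0 c P) i = (col_at P i + c) mod w"
proof -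
  show 1: "is_pat n w (tran w 0 c P)"
    unfolding is_pat_def
  proof (intro conjI allI impI subsetI)
    fix x assume "x \<in> tran w 0 c P"
    then obtain i j where x: "x = (i,j)" "(i,j) \<in> tran w 0 c P" by (cases x) auto
    then obtain j' where "(i,j') \<in> P" "j = (j'+c) mod w" by (auto simp: tran0_mem)
    then show "x \<in> {..<n} \<times> {..<w}" using x assms is_pat_mem[OF assms(1)] by auto
  next
    fix i assume i: "i < n"
    show "\<exists>!j. (i,j) \<in> tran w 0 c P"
    proof
      show "(i, (col_at P i + c) mod w) \<in> tran w 0 c P"
        using is_pat_col[OF assms(1) i] by (auto simp: tran0_mem)
    next
      fix j assume "(i,j) \<in> tran w 0 c P"
      then obtain j' where "(i,j') \<in> P" "j = (j'+c) mod w" by (auto simp: tran0_mem)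
      then show "j = (col_at P i + c) mod w" using is_pat_mem[OF assms(1)] by auto
    qed
  qed
  fix i assume i: "i < n"
  have "(i, (col_at P i + c) mod w) \<in> tran w 0 c P"
    using is_pat_col[OF assms(1) i] by (auto simp: tran0_mem)
  then show "col_at (tran w 0 c P) i = (col_at P i + c) mod w" using is_pat_mem[OF 1] by auto
qed

lemma Delta_tran0:
  assumes "is_pat n w P" "w > 0" "n \<ge> 1"
  shows "Delta w (tran w 0 c P) = Delta w P"
proof -
  have a: "n - 1 < n" "0 < n" using assms by auto
  have "Delta w (tran w 0 c P) = nat ((int ((col_at P (n-1) + c) mod w) - int ((col_at P 0 + c) mod w)) mod int w)"
    using Delta_pat[OF is_pat_tran0(1)[OF assms(1,2)] assms(3)] is_pat_tran0(2)[OF assms(1,2) a(1)]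
      is_pat_tran0(2)[OF assms(1,2) a(2)] by simp
  also have "\<dots> = nat ((int (col_at P (n-1)) - int (col_at P 0)) mod int w)"
  proof -
    have "(int ((col_at P (n-1) + c) mod w) - int ((col_at P 0 + c) mod w)) mod int w
        = ((int (col_at P (n-1)) + int c) mod int w - (int (col_at P 0) + int c) mod int w) mod int w"
      by (simp add: zmod_int)
    also have "\<dots> = ((int (col_at P (n-1)) + int c) - (int (col_at P 0) + int c)) mod int w"
      by (simp add: mod_diff_eq)
    also have "\<dots> = (int (col_at P (n-1)) - int (col_at P 0)) mod int w" by simp
    finally show ?thesis by simp
  qed
  also have "\<dots> = Delta w P" using Delta_pat[OF assms(1,3)] by simp
  finally show ?thesis .
qed

lemma is_pat_double:
  assumes "is_pat n w Q" "w > 0"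
  shows "is_pat (2*n) w (Q \<union> tran w n c Q)"
    "\<And>i. i < n \<Longrightarrow> col_at (Q \<union> tran w n c Q) i = col_at Q i"
    "\<And>i. n \<le> i \<Longrightarrow> i < 2*n \<Longrightarrow> col_at (Q \<union> tran w n c Q) i = (col_at Q (i-n) + c) mod w"
proof -
  have Qr: "\<And>i j. (i,j) \<in> Q \<Longrightarrow> i < n" using is_pat_mem[OF assms(1)] by blast
  show 1: "is_pat (2*n) w (Q \<union> tran w n c Q)"
    unfolding is_pat_def
  proof (intro conjI allI impI subsetI)
    fix x assume "x \<in> Q \<union> tran w n c Q"
    then obtain i j where x: "x = (i,j)" "(i,j) \<in> Q \<or> (i,j) \<in> tran w n c Q" by (cases x) auto
    from x(2) show "x \<in> {..<2*n} \<times> {..<w}"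
    proof
      assume "(i,j) \<in> Q" then have "i < n" "j < w" using is_pat_mem[OF assms(1)] by auto
      then show ?thesis using x by auto
    next
      assume "(i,j) \<in> tran w n c Q"
      then obtain j' where "n \<le> i" "(i-n,j') \<in> Q" "j = (j'+c) mod w" unfolding tran_mem by blast
      then have "i < 2*n" "j < w" using assms(2) Qr[of "i-n" j'] by auto
      then show ?thesis using x by simp
    qed
  next
    fix i assume i: "i < 2*n"
    show "\<exists>!j. (i,j) \<in> Q \<union> tran w n c Q"
    proof (cases "i < n")
      case True
      then have nT: "(i,j) \<notin> tran w n c Q" for j by (auto simp: tran_mem)
      show ?thesis
      proof (rule ex1I)
        show "(i, col_at Q i) \<in> Q \<union> tran w n c Q" using is_pat_col(1)[OF assms(1) True] by blast
      next
        fix j assume "(i,j) \<in> Q \<union> tran w n c Q"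
        then have "(i,j) \<in> Q" using nT by blast
        then show "j = col_at Q i" using is_pat_mem(3)[OF assms(1)] by metis
      qed
    next
      case False
      then have nQ: "(i,j) \<notin> Q" for j using Qr by auto
      have m: "i - n < n" using i False by auto
      have ni: "n \<le> i" using False by simp
      show ?thesis
      proof (rule ex1I)
        show "(i, (col_at Q (i-n) + c) mod w) \<in> Q \<union> tran w n c Q"
        proof (rule UnI2)
          show "(i, (col_at Q (i-n) + c) mod w) \<in> tran w n c Q"
            unfolding tran_mem using is_pat_col(1)[OF assms(1) m] ni by blast
        qed
      next
        fix j assume "(i,j) \<in> Q \<union> tran w n c Q"
        then have "(i,j) \<in> tran w n c Q" using nQ by blast
        then obtain j' where "(i-n, j') \<in> Q" "j = (j'+c) mod w" unfolding tran_mem by blast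
        then show "j = (col_at Q (i-n) + c) mod w" using is_pat_mem(3)[OF assms(1)] by blast
      qed
    qed
  qed
  show "col_at (Q \<union> tran w n c Q) i = col_at Q i" if "i < n" for i
    using is_pat_mem[OF 1] is_pat_col[OF assms(1) that] by blast
  show "col_at (Q \<union> tran w n c Q) i = (col_at Q (i-n) + c) mod w" if "n \<le> i" "i < 2*n" for i
  proof -
    have "i - n < n" using that by auto
    then have "(i, (col_at Q (i-n) + c) mod w) \<in> tran w n c Q"
      using is_pat_col[OF assms(1)] that by (auto simp: tran_mem)
    then show ?thesis using is_pat_mem[OF 1] by blast
  qed
qed

lemma L_SucE:
  assumes "P \<in> L w (Suc k)"
  obtains Q s where "Q \<in> L w k" "s \<in> {0,1}" "P = U w k Q s"
proof -
  from assms obtain T s where "P = T \<union> tran w (2^k) (Delta w T + s) T" "T \<in> L w k" "s \<in> {0,1}"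
    by (auto simp: FHT_level.simps(2))
  then show ?thesis using that unfolding U_def by blast
qed

lemma U_in_L: "Q \<in> L w k \<Longrightarrow> s \<in> {0,1} \<Longrightarrow> U w k Q s \<in> L w (Suc k)"
  unfolding U_def by (simp only: FHT_level.simps(2)) blast

lemma L_pat: "w > 0 \<Longrightarrow> P \<in> L w k \<Longrightarrow> is_pat (2^k) w P"
proof (induction k arbitrary: P)
  case 0
  then show ?case by (auto simp: is_pat_def)
next
  case (Suc k)
  obtain Q s where "Q \<in> L w k" "s \<in> {0,1}" "P = U w k Q s" by (rule L_SucE[OF Suc.prems(2)])
  then show ?case using is_pat_double(1)[OF Suc.IH[OF Suc.prems(1)], of Q] Suc.prems(1)
    by (simp add: U_def)
qed

lemma L_shift: "w > 0 \<Longrightarrow> P \<in> L w k \<Longrightarrow> tran w 0 c P \<in> L w k"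
proof (induction k arbitrary: P)
  case 0
  then obtain j where "P = {(0,j)}" "j < w" by auto
  then have "tran w 0 c P = {(0, (j+c) mod w)}" by (simp add: tran_def)
  then show ?case using 0 by auto
next
  case (Suc k)
  obtain Q s where Q: "Q \<in> L w k" "s \<in> {0,1}" "P = U w k Q s" by (rule L_SucE[OF Suc.prems(2)])
  have pQ: "is_pat (2^k) w Q" using L_pat Suc.prems Q by blast
  have "tran w 0 c P = U w k (tran w 0 c Q) s"
    unfolding Q U_def tran_Un tran_comm using Delta_tran0[OF pQ Suc.prems(1), of c] by simp
  moreover have "tran w 0 c Q \<in> L w k" using Suc.IH Suc.prems Q by blast
  ultimately show ?case using Q U_in_L by metis
qed

lemma U_low:
  assumes "is_pat (2^k) w Q"
  shows "{p \<in> U w k Q s. fst p < 2^k} = Q"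
  using is_pat_mem[OF assms] unfolding U_def by (auto simp: tran_mem)

lemma U_low_le: "m \<le> 2^d \<Longrightarrow> {p \<in> U w d Q s. fst p < m} = {p \<in> Q. fst p < m}"
  unfolding U_def by (auto simp: tran_mem)

lemma U_inj:
  assumes "w \<ge> 2" "Q \<in> L w k" "Q' \<in> L w k" "s \<in> {0,1}" "s' \<in> {0,1}" "U w k Q s = U w k Q' s'"
  shows "Q = Q' \<and> s = s'"
proof -
  have w: "w > 0" using assms by auto
  have pQ: "is_pat (2^k) w Q" "is_pat (2^k) w Q'" using L_pat w assms by blast+
  have QQ: "Q = Q'" using U_low[OF pQ(1), of s] U_low[OF pQ(2), of s'] assms(6) by metis
  let ?c = "col_at Q 0"
  have c0: "(0, ?c) \<in> Q" using is_pat_col[OF pQ(1)] by simp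
  have "(2^k, (?c + (Delta w Q + s)) mod w) \<in> tran w (2^k) (Delta w Q + s) Q"
    unfolding tran_mem using c0 by (intro conjI exI[of _ "col_at Q 0"]) auto
  then have "(2^k, (?c + (Delta w Q + s)) mod w) \<in> U w k Q s" unfolding U_def by blast
  then have "(2^k, (?c + (Delta w Q + s)) mod w) \<in> U w k Q s'" using assms(6) QQ by simp
  moreover have "(2^k, (?c + (Delta w Q + s)) mod w) \<notin> Q" using is_pat_mem(1)[OF pQ(1), of "2^k"] by auto
  ultimately have "(2^k, (?c + (Delta w Q + s)) mod w) \<in> tran w (2^k) (Delta w Q + s') Q"
    unfolding U_def by blast
  then obtain j' where "(0, j') \<in> Q" "(?c + (Delta w Q + s)) mod w = (j' + (Delta w Q + s')) mod w"
    unfolding tran_mem by auto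
  then have "(?c + Delta w Q + s) mod w = (?c + Delta w Q + s') mod w"
    using is_pat_mem(3)[OF pQ(1)] by (simp add: add.assoc)
  then have "s = s'" using mod_s_eq[OF _ assms(4,5,1)] by blast
  then show ?thesis using QQ by simp
qed

lemma L0_eq: "L w 0 = (\<lambda>j. {(0::nat,j)}) ` {..<w}" by auto
lemma L0_inj: "inj_on (\<lambda>j. {(0::nat,j)}) {..<w}" by (auto simp: inj_on_def)

lemma L_card: "w \<ge> 2 \<Longrightarrow> card (L w k) = w * 2^k"
proof (induction k)
  case 0
  show ?case unfolding L0_eq by (simp add: card_image L0_inj)
next
  case (Suc k)
  have inj: "inj_on (\<lambda>(Q,s). U w k Q s) (L w k \<times> {0,1})"
  proof (rule inj_onI)
    fix x y assume "x \<in> L w k \<times> {0,1}" "y \<in> L w k \<times> {0,1}"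
      "(\<lambda>(Q,s). U w k Q s) x = (\<lambda>(Q,s). U w k Q s) y"
    then show "x = y" using U_inj[OF Suc.prems, of "fst x" k "fst y" "snd x" "snd y"]
      by (cases x, cases y) auto
  qed
  have "card (L w (Suc k)) = card (L w k \<times> {0::nat,1})" unfolding L_Suc using card_image[OF inj] .
  also have "\<dots> = card (L w k) * 2" by (simp add: card_cartesian_product)
  also have "\<dots> = w * 2^Suc k" using Suc.IH[OF Suc.prems] by simp
  finally show ?case .
qed

lemma L_finite: "finite (L w k)"
proof (induction k)
  case 0
  show ?case unfolding L0_eq by simp
next
  case (Suc k) then show ?case unfolding L_Suc by simp
qed

lemma L_restrict: "w > 0 \<Longrightarrow> k \<le> d \<Longrightarrow> P \<in> L w d \<Longrightarrow> {p \<in> P. fst p < 2^k} \<in> L w k"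
proof (induction d arbitrary: P)
  case 0
  then have "k = 0" by simp
  with 0 show ?case by auto
next
  case (Suc d)
  show ?case
  proof (cases "k = Suc d")
    case True
    then have "{p \<in> P. fst p < 2^k} = P" using is_pat_mem(1)[OF L_pat[OF Suc.prems(1,3)]] by auto
    then show ?thesis using True Suc.prems by metis
  next
    case False
    then have kd: "k \<le> d" using Suc.prems by simp
    obtain Q s where Q: "Q \<in> L w d" "s \<in> {0,1}" "P = U w d Q s" by (rule L_SucE[OF Suc.prems(3)])
    have "(2::nat)^k \<le> 2^d" using kd by (simp add: power_increasing)
    then have "{p \<in> P. fst p < 2^k} = {p \<in> Q. fst p < 2^k}" using Q(3) U_low_le by blast
    then show ?thesis using Suc.IH[OF Suc.prems(1) kd Q(1)] by simp
  qed
qed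

lemma L_extend: "w > 0 \<Longrightarrow> k \<le> d \<Longrightarrow> Q \<in> L w k \<Longrightarrow> \<exists>P \<in> L w d. {p \<in> P. fst p < 2^k} = Q"
proof (induction d)
  case 0
  then have "k = 0" by simp
  with 0 show ?case by (intro bexI[of _ Q]) auto
next
  case (Suc d)
  show ?case
  proof (cases "k = Suc d")
    case True
    then have "{p \<in> Q. fst p < 2^k} = Q" using is_pat_mem(1)[OF L_pat[OF Suc.prems(1,3)]] by auto
    then show ?thesis using True Suc.prems by blast
  next
    case False
    then have kd: "k \<le> d" using Suc.prems by simp
    obtain P where P: "P \<in> L w d" "{p \<in> P. fst p < 2^k} = Q" using Suc.IH Suc.prems kd by blast
    have "(2::nat)^k \<le> 2^d" using kd by (simp add: power_increasing)
    then have "{p \<in> U w d P 0. fst p < 2^k} = {p \<in> P. fst p < 2^k}" using U_low_le by blast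
    moreover have "U w d P 0 \<in> L w (Suc d)" using P U_in_L by blast
    ultimately show ?thesis using P by metis
  qed
qed


lemma U_mem_low:
  assumes "is_pat (2^k) w Q" "i < 2^k"
  shows "(i,j) \<in> U w k Q s \<longleftrightarrow> (i,j) \<in> Q"
  using assms(2) unfolding U_def Un_iff tran_mem by auto

lemma U_mem_high:
  assumes "is_pat (2^k) w Q" "\<not> i < 2^k"
  shows "(i,j) \<in> U w k Q s \<longleftrightarrow> (i - 2^k, j) \<in> tran w 0 (Delta w Q + s) Q"
proof -
  have "(i,j) \<notin> Q" using is_pat_mem(1)[OF assms(1), of i j] assms(2) by auto
  then show ?thesis using assms(2) unfolding U_def Un_iff tran_mem by auto
qed

definition Sd :: "nat \<Rightarrow> pixel set \<Rightarrow> pixel set" where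
  "Sd k S = (\<lambda>(i,j). (i - 2^k, j)) ` {p \<in> S. \<not> fst p < 2^k}"

lemma subset_U:
  assumes "is_pat (2^k) w Q"
  shows "S \<subseteq> U w k Q s \<longleftrightarrow> ({p \<in> S. fst p < 2^k} \<subseteq> Q \<and> Sd k S \<subseteq> tran w 0 (Delta w Q + s) Q)"
proof
  assume a: "S \<subseteq> U w k Q s"
  have 1: "{p \<in> S. fst p < 2^k} \<subseteq> Q"
  proof
    fix p assume "p \<in> {p \<in> S. fst p < 2^k}"
    then obtain i j where "p = (i,j)" "(i,j) \<in> S" "i < 2^k" by (cases p) auto
    then show "p \<in> Q" using a U_mem_low[OF assms, of i j s] by auto
  qed
  have 2: "Sd k S \<subseteq> tran w 0 (Delta w Q + s) Q"
  proof
    fix p assume "p \<in> Sd k S"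
    then obtain i j where "p = (i - 2^k, j)" "(i,j) \<in> S" "\<not> i < 2^k" unfolding Sd_def by auto
    then show "p \<in> tran w 0 (Delta w Q + s) Q" using a U_mem_high[OF assms, of i j s] by auto
  qed
  show "{p \<in> S. fst p < 2^k} \<subseteq> Q \<and> Sd k S \<subseteq> tran w 0 (Delta w Q + s) Q" using 1 2 by blast
next
  assume a: "{p \<in> S. fst p < 2^k} \<subseteq> Q \<and> Sd k S \<subseteq> tran w 0 (Delta w Q + s) Q"
  show "S \<subseteq> U w k Q s"
  proof
    fix p assume p: "p \<in> S"
    obtain i j where ij: "p = (i,j)" by (cases p)
    show "p \<in> U w k Q s"
    proof (cases "i < 2^k")
      case True
      then have "(i,j) \<in> Q" using a p ij by auto
      then show ?thesis using U_mem_low[OF assms True] ij by simp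
    next
      case False
      then have "(i - 2^k, j) \<in> Sd k S" unfolding Sd_def using p ij by (auto simp: image_iff intro!: bexI[of _ "(i,j)"])
      then have "(i - 2^k, j) \<in> tran w 0 (Delta w Q + s) Q" using a by blast
      then show ?thesis using U_mem_high[OF assms False] ij by simp
    qed
  qed
qed

lemma Sd_card: "card (Sd k S) = card {p \<in> S. \<not> fst p < 2^k}"
proof -
  have "inj_on (\<lambda>(i,j). (i - 2^k, j::nat)) {p \<in> S. \<not> fst p < 2^k}"
    by (rule inj_onI) auto
  then show ?thesis unfolding Sd_def by (rule card_image)
qed

lemma Sd_empty: "Sd k S = {} \<longleftrightarrow> {p \<in> S. \<not> fst p < 2^k} = {}"
  unfolding Sd_def by blast

lemma col_unique:
  assumes "is_pat n w R" "(i,j) \<in> R" "(i,j') \<in> R"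
  shows "j = j'"
  using is_pat_mem(3)[OF assms(1,2)] is_pat_mem(3)[OF assms(1,3)] by simp

lemma pat_sub: "is_pat n w Q \<Longrightarrow> Q \<subseteq> UNIV \<times> {..<w}"
  unfolding is_pat_def by auto

lemma KL:
  assumes "w \<ge> 2" "S \<noteq> {}"
  shows "card {P \<in> L w k. S \<subseteq> P} * card S \<le> 2^k"
  using assms(2)
proof (induction k arbitrary: S)
  case 0
  show ?case
  proof (cases "{P \<in> L w 0. S \<subseteq> P} = {}")
    case True show ?thesis unfolding True by simp
  next
    case False
    then obtain j where j: "j < w" "S \<subseteq> {(0,j)}" by auto
    then have Sj: "S = {(0,j)}" using 0 by auto
    have "{P \<in> L w 0. S \<subseteq> P} \<subseteq> {S}" using Sj by auto
    then have "card {P \<in> L w 0. S \<subseteq> P} \<le> card {S}" by (rule card_mono[rotated]) simp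
    then have "card {P \<in> L w 0. S \<subseteq> P} \<le> 1" by simp
    then show ?thesis using Sj by simp
  qed
next
  case (Suc k)
  have w0: "w > 0" using assms(1) by simp
  let ?X = "{x \<in> L w k \<times> {0::nat,1}. S \<subseteq> U w k (fst x) (snd x)}"
  let ?Sb = "{p \<in> S. fst p < 2^k}"
  let ?St = "{p \<in> S. \<not> fst p < 2^k}"
  let ?D = "Sd k S"
  have finX: "finite ?X" using L_finite[of w k] by simp
  have pats: "\<And>Q. Q \<in> L w k \<Longrightarrow> is_pat (2^k) w Q" using L_pat w0 by blast
  have A_eq: "{P \<in> L w (Suc k). S \<subseteq> P} = (\<lambda>x. U w k (fst x) (snd x)) ` ?X"
  proof (intro equalityI subsetI)
    fix P assume "P \<in> {P \<in> L w (Suc k). S \<subseteq> P}"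
    then have P: "P \<in> L w (Suc k)" "S \<subseteq> P" by auto
    obtain Q s where Q: "Q \<in> L w k" "s \<in> {0,1}" "P = U w k Q s" by (rule L_SucE[OF P(1)])
    show "P \<in> (\<lambda>x. U w k (fst x) (snd x)) ` ?X"
      by (rule image_eqI[of _ _ "(Q,s)"]) (use Q P in auto)
  next
    fix P assume "P \<in> (\<lambda>x. U w k (fst x) (snd x)) ` ?X"
    then obtain x where x: "x \<in> ?X" "P = U w k (fst x) (snd x)" by blast
    then show "P \<in> {P \<in> L w (Suc k). S \<subseteq> P}" using U_in_L[of "fst x" w k "snd x"] by auto
  qed
  have cardA: "card {P \<in> L w (Suc k). S \<subseteq> P} \<le> card ?X"
    unfolding A_eq by (rule card_image_le[OF finX])
  show ?case
  proof (cases "?X = {}")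
    case True
    then have "card {P \<in> L w (Suc k). S \<subseteq> P} = 0" using cardA by (simp only: card.empty)
    then show ?thesis by simp
  next
    case False
    then obtain Q0 s0 where "(Q0,s0) \<in> ?X" by auto
    then have "S \<subseteq> U w k Q0 s0" "Q0 \<in> L w k" by auto
    moreover have "finite (U w k Q0 s0)" unfolding U_def tran_def
      using is_pat_finite[OF pats[OF \<open>Q0 \<in> L w k\<close>]] by simp
    ultimately have finS: "finite S" using finite_subset by blast
    have cardS: "card S = card ?Sb + card ?D"
    proof -
      have "S = ?Sb \<union> ?St" by blast
      then have "card S = card (?Sb \<union> ?St)" by simp
      also have "\<dots> = card ?Sb + card ?St" by (rule card_Un_disjoint) (use finS in auto)
      finally show ?thesis using Sd_card[of k S] by simp
    qed
    have Xmem0: "(Q,s) \<in> ?X \<longleftrightarrow> Q \<in> L w k \<and> s \<in> {0,1} \<and> S \<subseteq> U w k Q s" for Q s by simp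
    have Xmem: "(Q,s) \<in> ?X \<longleftrightarrow> Q \<in> L w k \<and> s \<in> {0,1} \<and> ?Sb \<subseteq> Q \<and> ?D \<subseteq> tran w 0 (Delta w Q + s) Q" for Q s
    proof (cases "Q \<in> L w k")
      case True show ?thesis unfolding Xmem0 subset_U[OF pats[OF True]] by blast
    next
      case False show ?thesis unfolding Xmem0 using False by blast
    qed
    define cb where "cb = card {Q \<in> L w k. ?Sb \<subseteq> Q}"
    define ct where "ct = card {R \<in> L w k. ?D \<subseteq> R}"
    have fin1: "finite {Q \<in> L w k. ?Sb \<subseteq> Q}" "finite {R \<in> L w k. ?D \<subseteq> R}"
      using L_finite[of w k] by auto
    have shift_in: "tran w 0 (Delta w Q + s) Q \<in> {R \<in> L w k. ?D \<subseteq> R}" if "(Q,s) \<in> ?X" for Q s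
      using that Xmem L_shift[OF w0] by blast
    have shift_inj: "Q = Q'" if "Q \<in> L w k" "Q' \<in> L w k"
      "tran w 0 (Delta w Q + s) Q = tran w 0 (Delta w Q' + s) Q'" for Q Q' s
    proof -
      have pQ: "is_pat (2^k) w Q" "is_pat (2^k) w Q'" using pats that by auto
      have "Delta w Q = Delta w (tran w 0 (Delta w Q + s) Q)" using Delta_tran0[OF pQ(1) w0] by simp
      also have "\<dots> = Delta w Q'" using that(3) Delta_tran0[OF pQ(2) w0] by simp
      finally have "Delta w Q = Delta w Q'" .
      then show ?thesis using tran0_inj[OF pat_sub[OF pQ(1)] pat_sub[OF pQ(2)]] that(3) by metis
    qed
    show ?thesis
    proof (cases "?St = {}")
      case True
      then have Sb: "?Sb = S" by blast
      have "?X \<subseteq> {Q \<in> L w k. ?Sb \<subseteq> Q} \<times> {0,1}"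
      proof
        fix x assume x: "x \<in> ?X"
        obtain Q s where xq: "x = (Q,s)" by (cases x)
        show "x \<in> {Q \<in> L w k. ?Sb \<subseteq> Q} \<times> {0,1}" using Xmem[of Q s] x xq by auto
      qed
      then have "card ?X \<le> card ({Q \<in> L w k. ?Sb \<subseteq> Q} \<times> {0::nat,1})"
        by (rule card_mono[rotated]) (use fin1 in simp)
      also have "\<dots> = 2 * cb" unfolding cb_def by (simp add: card_cartesian_product)
      finally have cX: "card ?X \<le> 2 * cb" .
      have cbS: "cb * card S \<le> 2^k" using Suc.IH[of ?Sb] Suc.prems Sb unfolding cb_def by simp
      have "card {P \<in> L w (Suc k). S \<subseteq> P} * card S \<le> card ?X * card S" using cardA by (rule mult_le_mono1)
      also have "\<dots> \<le> (2 * cb) * card S" using cX by (rule mult_le_mono1)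
      also have "\<dots> = 2 * (cb * card S)" by simp
      also have "\<dots> \<le> 2 * 2^k" using cbS by simp
      finally show ?thesis by simp
    next
      case False
      have Dne: "?D \<noteq> {}" using False Sd_empty by blast
      have IHt: "ct * card ?D \<le> 2^k" using Suc.IH[OF Dne] unfolding ct_def by simp
      show ?thesis
      proof (cases "?Sb = {}")
        case True
        let ?phi = "\<lambda>x. (tran w 0 (Delta w (fst x) + snd x) (fst x), snd x)"
        have "inj_on ?phi ?X"
        proof (rule inj_onI)
          fix x y assume "x \<in> ?X" "y \<in> ?X" "?phi x = ?phi y"
          then show "x = y" using shift_inj[of "fst x" "fst y" "snd x"] by (cases x, cases y) auto
        qed
        moreover have "?phi ` ?X \<subseteq> {R \<in> L w k. ?D \<subseteq> R} \<times> {0,1}"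
        proof (rule image_subsetI)
          fix x assume x: "x \<in> ?X"
          obtain Q s where xq: "x = (Q,s)" by (cases x)
          show "?phi x \<in> {R \<in> L w k. ?D \<subseteq> R} \<times> {0,1}" using shift_in[of Q s] x xq by auto
        qed
        moreover have "finite ({R \<in> L w k. ?D \<subseteq> R} \<times> {0::nat,1})" using fin1(2) by simp
        ultimately have "card ?X \<le> card ({R \<in> L w k. ?D \<subseteq> R} \<times> {0::nat,1})"
          by (rule card_inj_on_le)
        also have "\<dots> = 2 * ct" unfolding ct_def by (simp add: card_cartesian_product)
        finally have cX: "card ?X \<le> 2 * ct" .
        have cSD: "card S = card ?D" using cardS True by simp
        have "card {P \<in> L w (Suc k). S \<subseteq> P} * card S \<le> card ?X * card S" using cardA by (rule mult_le_mono1)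
        also have "\<dots> \<le> (2 * ct) * card S" using cX by (rule mult_le_mono1)
        also have "\<dots> = 2 * (ct * card ?D)" using cSD by simp
        also have "\<dots> \<le> 2 * 2^k" using IHt by simp
        finally show ?thesis by simp
      next
        case False
        have IHb: "cb * card ?Sb \<le> 2^k" using Suc.IH[OF False] unfolding cb_def by simp
        obtain ib jb where b: "(ib,jb) \<in> ?Sb" using False by auto
        obtain it jt where t: "(it,jt) \<in> ?D" using Dne by auto
        let ?psi = "\<lambda>x. tran w 0 (Delta w (fst x) + snd x) (fst x)"
        have "inj_on ?psi ?X"
        proof (rule inj_onI)
          fix x y assume x: "x \<in> ?X" and y: "y \<in> ?X" and e: "?psi x = ?psi y"
          obtain Q s where xq: "x = (Q,s)" by (cases x)
          obtain Q' s' where yq: "y = (Q',s')" by (cases y)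
          have m: "Q \<in> L w k" "s \<in> {0,1}" "?Sb \<subseteq> Q" "Q' \<in> L w k" "s' \<in> {0,1}" "?Sb \<subseteq> Q'"
            using x y xq yq Xmem by auto
          have pQ: "is_pat (2^k) w Q" "is_pat (2^k) w Q'" using pats m by auto
          let ?R = "tran w 0 (Delta w Q + s) Q"
          have pR: "is_pat (2^k) w ?R" using is_pat_tran0(1)[OF pQ(1) w0] .
          have R': "?R = tran w 0 (Delta w Q' + s') Q'" using e xq yq by simp
          have dd: "Delta w Q = Delta w Q'"
          proof -
            have "Delta w Q = Delta w ?R" using Delta_tran0[OF pQ(1) w0] by simp
            also have "\<dots> = Delta w Q'" using R' Delta_tran0[OF pQ(2) w0] by simp
            finally show ?thesis .
          qed
          have "(ib, (jb + (Delta w Q + s)) mod w) \<in> ?R" using b m(3) unfolding tran0_mem by blast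
          moreover have "(ib, (jb + (Delta w Q' + s')) mod w) \<in> tran w 0 (Delta w Q' + s') Q'"
            using b m(6) unfolding tran0_mem by blast
          then have "(ib, (jb + (Delta w Q' + s')) mod w) \<in> ?R" using R' by simp
          ultimately have "(jb + (Delta w Q + s)) mod w = (jb + (Delta w Q + s')) mod w"
            using col_unique[OF pR] dd by metis
          then have "(jb + Delta w Q + s) mod w = (jb + Delta w Q + s') mod w" by (simp add: add.assoc)
          then have ss: "s = s'" using mod_s_eq[OF _ m(2) m(5) assms(1)] by blast
          then have "Q = Q'" using shift_inj[OF m(1) m(4)] e xq yq by simp
          then show "x = y" using ss xq yq by simp
        qed
        moreover have "?psi ` ?X \<subseteq> {R \<in> L w k. ?D \<subseteq> R}"
        proof (rule image_subsetI)
          fix x assume x: "x \<in> ?X"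
          obtain Q s where xq: "x = (Q,s)" by (cases x)
          show "?psi x \<in> {R \<in> L w k. ?D \<subseteq> R}" using shift_in[of Q s] x xq by auto
        qed
        ultimately have c1: "card ?X \<le> ct" unfolding ct_def using card_inj_on_le fin1(2) by blast
        have "inj_on fst ?X"
        proof (rule inj_onI)
          fix x y assume x: "x \<in> ?X" and y: "y \<in> ?X" and e: "fst x = fst y"
          obtain Q s where xq: "x = (Q,s)" by (cases x)
          obtain Q' s' where yq: "y = (Q',s')" by (cases y)
          have QQ: "Q = Q'" using e xq yq by simp
          have m: "Q \<in> L w k" "s \<in> {0,1}" "?D \<subseteq> tran w 0 (Delta w Q + s) Q" "s' \<in> {0,1}"
            "?D \<subseteq> tran w 0 (Delta w Q + s') Q"
            using x y xq yq Xmem QQ by auto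
          have pQ: "is_pat (2^k) w Q" using pats m by auto
          have "(it,jt) \<in> tran w 0 (Delta w Q + s) Q" using t m(3) by blast
          then obtain j1 where j1: "(it,j1) \<in> Q" "jt = (j1 + (Delta w Q + s)) mod w" unfolding tran0_mem by blast
          have "(it,jt) \<in> tran w 0 (Delta w Q + s') Q" using t m(5) by blast
          then obtain j2 where j2: "(it,j2) \<in> Q" "jt = (j2 + (Delta w Q + s')) mod w" unfolding tran0_mem by blast
          have "j1 = j2" using col_unique[OF pQ j1(1) j2(1)] .
          then have "(j1 + Delta w Q + s) mod w = (j1 + Delta w Q + s') mod w" using j1 j2 by (simp add: add.assoc)
          then have "s = s'" using mod_s_eq[OF _ m(2) m(4) assms(1)] by blast
          then show "x = y" using QQ xq yq by simp
        qed
        moreover have "fst ` ?X \<subseteq> {Q \<in> L w k. ?Sb \<subseteq> Q}"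
        proof (rule image_subsetI)
          fix x assume x: "x \<in> ?X"
          obtain Q s where xq: "x = (Q,s)" by (cases x)
          show "fst x \<in> {Q \<in> L w k. ?Sb \<subseteq> Q}" using Xmem[of Q s] x xq by auto
        qed
        ultimately have c2: "card ?X \<le> cb" unfolding cb_def using card_inj_on_le fin1(1) by blast
        have "card ?X * card S = card ?X * card ?Sb + card ?X * card ?D" using cardS by (simp add: algebra_simps)
        also have "\<dots> \<le> cb * card ?Sb + ct * card ?D" using c1 c2 by (simp add: add_mono mult_le_mono1)
        also have "\<dots> \<le> 2 * 2^k" using IHb IHt by simp
        finally have "card ?X * card S \<le> 2 * 2^k" .
        moreover have "card {P \<in> L w (Suc k). S \<subseteq> P} * card S \<le> card ?X * card S" using cardA by (rule mult_le_mono1)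
        ultimately show ?thesis by (simp only: power_Suc)
      qed
    qed
  qed
qed


lemma circD:
  assumes "is_circuit I \<T> V E inp out"
  shows "finite V" "E \<subseteq> V \<times> V" "\<forall>v. (v, v) \<notin> E\<^sup>+" "inj_on inp I" "inp ` I \<subseteq> V"
    "\<forall>p\<in>I. preds E (inp p) = {}" "\<forall>v\<in>V. preds E v = {} \<longrightarrow> v \<in> inp ` I"
    "inj_on out \<T>" "out ` \<T> \<subseteq> V" "\<forall>T\<in>\<T>. \<forall>u. (out T, u) \<notin> E"
proof -
  note h = assms[unfolded is_circuit_def]
  show "finite V" using h by (rule conjunct1)
  show "E \<subseteq> V \<times> V" using h[THEN conjunct2] by (rule conjunct1)
  show "\<forall>v. (v, v) \<notin> E\<^sup>+" using h[THEN conjunct2, THEN conjunct2] by (rule conjunct1)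
  show "inj_on inp I" using h[THEN conjunct2, THEN conjunct2, THEN conjunct2] by (rule conjunct1)
  show "inp ` I \<subseteq> V" using h[THEN conjunct2, THEN conjunct2, THEN conjunct2, THEN conjunct2] by (rule conjunct1)
  show "\<forall>p\<in>I. preds E (inp p) = {}" using h[THEN conjunct2, THEN conjunct2, THEN conjunct2, THEN conjunct2, THEN conjunct2] by (rule conjunct1)
  show "\<forall>v\<in>V. preds E v = {} \<longrightarrow> v \<in> inp ` I" using h[THEN conjunct2, THEN conjunct2, THEN conjunct2, THEN conjunct2, THEN conjunct2, THEN conjunct2] by (rule conjunct1)
  show "inj_on out \<T>" using h[THEN conjunct2, THEN conjunct2, THEN conjunct2, THEN conjunct2, THEN conjunct2, THEN conjunct2, THEN conjunct2] by (rule conjunct1)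
  show "out ` \<T> \<subseteq> V" using h[THEN conjunct2, THEN conjunct2, THEN conjunct2, THEN conjunct2, THEN conjunct2, THEN conjunct2, THEN conjunct2, THEN conjunct2] by (rule conjunct1)
  show "\<forall>T\<in>\<T>. \<forall>u. (out T, u) \<notin> E" using h[THEN conjunct2, THEN conjunct2, THEN conjunct2, THEN conjunct2, THEN conjunct2, THEN conjunct2, THEN conjunct2, THEN conjunct2] by (rule conjunct2)
qed

lemma rtrancl_preds:
  "(a,v) \<in> E\<^sup>* \<longleftrightarrow> a = v \<or> (\<exists>c \<in> preds E v. (a,c) \<in> E\<^sup>*)"
proof
  assume "(a,v) \<in> E\<^sup>*"
  then show "a = v \<or> (\<exists>c \<in> preds E v. (a,c) \<in> E\<^sup>*)"
    by (rule rtranclE) (auto simp: preds_def)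
next
  assume "a = v \<or> (\<exists>c \<in> preds E v. (a,c) \<in> E\<^sup>*)"
  then show "(a,v) \<in> E\<^sup>*" by (auto simp: preds_def intro: rtrancl_into_rtrancl)
qed

lemma rtrancl_nopreds: "preds E v = {} \<Longrightarrow> (a,v) \<in> E\<^sup>* \<longleftrightarrow> a = v"
  using rtrancl_preds[of a v E] by simp

lemma circ_wf:
  assumes "is_circuit I \<T> V E inp out"
  shows "wf E"
proof -
  have "E \<subseteq> V \<times> V" "finite V" using circD[OF assms] by auto
  then have "finite E" using finite_subset finite_cartesian_product by blast
  moreover have "acyclic E" using circD(3)[OF assms] unfolding acyclic_def .
  ultimately show ?thesis by (rule finite_acyclic_wf)
qed

lemma circ_preds_sub:
  assumes "is_circuit I \<T> V E inp out"
  shows "preds E v \<subseteq> V" "finite (preds E v)"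
proof -
  show "preds E v \<subseteq> V" using circD(2)[OF assms] unfolding preds_def by blast
  then show "finite (preds E v)" using circD(1)[OF assms] by (rule finite_subset)
qed

lemma reach_SUM:
  assumes c: "is_circuit I \<T> V E inp out" and s: "computes_SUM I \<T> V E inp out"
    and T: "T \<in> \<T>" "finite T" "T \<subseteq> I" and p: "p \<in> I"
  shows "p \<in> T \<longleftrightarrow> (inp p, out T) \<in> E\<^sup>*"
proof -
  define x where "x = (\<lambda>q. if q = p then 1 else (0::nat))"
  obtain val where v1: "\<forall>q\<in>I. val (inp q) = x q"
    and v2: "\<forall>v\<in>V. preds E v \<noteq> {} \<longrightarrow> val v = (\<Sum>u\<in>preds E v. val u)"
    and v3: "\<forall>T\<in>\<T>. val (out T) = (\<Sum>q\<in>T. x q)"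
    using spec[OF s[unfolded computes_SUM_def], of x] by (elim exE conjE)
  note cc = circD(1,4,5,6,7,9)[OF c]
  have key: "v \<in> V \<Longrightarrow> (val v \<noteq> 0 \<longleftrightarrow> (inp p, v) \<in> E\<^sup>*)" for v
  proof (induction v rule: wf_induct_rule[OF circ_wf[OF c]])
    case (1 v)
    show ?case
    proof (cases "preds E v = {}")
      case True
      then obtain q where q: "q \<in> I" "v = inp q" using cc(5) 1(2) by blast
      have "(inp p, v) \<in> E\<^sup>* \<longleftrightarrow> inp p = inp q" using rtrancl_nopreds[OF True] q by simp
      also have "\<dots> \<longleftrightarrow> p = q" using cc(2) p q(1) by (meson inj_onD)
      finally show ?thesis using v1 q unfolding x_def by auto
    next
      case False
      have "val v = (\<Sum>u\<in>preds E v. val u)" using v2 1(2) False by blast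
      then have "val v \<noteq> 0 \<longleftrightarrow> (\<exists>u\<in>preds E v. val u \<noteq> 0)"
        using circ_preds_sub(2)[OF c, of v] by simp
      also have "\<dots> \<longleftrightarrow> (\<exists>u\<in>preds E v. (inp p, u) \<in> E\<^sup>*)"
      proof -
        have IH: "(val u \<noteq> 0 \<longleftrightarrow> (inp p, u) \<in> E\<^sup>*)" if u: "u \<in> preds E v" for u
        proof -
          have "(u,v) \<in> E" using u by (simp add: preds_def)
          moreover have "u \<in> V" using u circ_preds_sub(1)[OF c, of v] by blast
          ultimately show ?thesis using 1(1) by blast
        qed
        show ?thesis using IH by blast
      qed
      also have "\<dots> \<longleftrightarrow> (inp p, v) \<in> E\<^sup>*"
      proof -
        have "inp p \<noteq> v" using False cc(4) p by auto
        then show ?thesis using rtrancl_preds[of "inp p" v E] by simp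
      qed
      finally show ?thesis .
    qed
  qed
  have "val (out T) = (\<Sum>q\<in>T. x q)" using v3 T by blast
  also have "\<dots> = (if p \<in> T then 1 else 0)" unfolding x_def using T(2) by simp
  finally have e: "val (out T) = (if p \<in> T then 1 else 0)" .
  have o: "out T \<in> V" using cc(6) T(1) by blast
  show ?thesis using key[OF o] e by (cases "p \<in> T") simp_all
qed

lemma reach_OR:
  assumes c: "is_circuit I \<T> V E inp out" and s: "computes_OR I \<T> V E inp out"
    and T: "T \<in> \<T>" "T \<subseteq> I" and p: "p \<in> I"
  shows "p \<in> T \<longleftrightarrow> (inp p, out T) \<in> E\<^sup>*"
proof -
  define x where "x = (\<lambda>q. q = p)"
  obtain val where v1: "\<forall>q\<in>I. val (inp q) = x q"
    and v2: "\<forall>v\<in>V. preds E v \<noteq> {} \<longrightarrow> val v = (\<exists>u\<in>preds E v. val u)"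
    and v3: "\<forall>T\<in>\<T>. val (out T) = (\<exists>q\<in>T. x q)"
    using spec[OF s[unfolded computes_OR_def], of x] by (elim exE conjE)
  note cc = circD(1,4,5,6,7,9)[OF c]
  have key: "v \<in> V \<Longrightarrow> (val v \<longleftrightarrow> (inp p, v) \<in> E\<^sup>*)" for v
  proof (induction v rule: wf_induct_rule[OF circ_wf[OF c]])
    case (1 v)
    show ?case
    proof (cases "preds E v = {}")
      case True
      then obtain q where q: "q \<in> I" "v = inp q" using cc(5) 1(2) by blast
      have "(inp p, v) \<in> E\<^sup>* \<longleftrightarrow> inp p = inp q" using rtrancl_nopreds[OF True] q by simp
      also have "\<dots> \<longleftrightarrow> p = q" using cc(2) p q(1) by (meson inj_onD)
      finally show ?thesis using v1 q unfolding x_def by auto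
    next
      case False
      have "val v \<longleftrightarrow> (\<exists>u\<in>preds E v. val u)" using v2 1(2) False by blast
      also have "\<dots> \<longleftrightarrow> (\<exists>u\<in>preds E v. (inp p, u) \<in> E\<^sup>*)"
      proof -
        have IH: "(val u \<longleftrightarrow> (inp p, u) \<in> E\<^sup>*)" if u: "u \<in> preds E v" for u
        proof -
          have "(u,v) \<in> E" using u by (simp add: preds_def)
          moreover have "u \<in> V" using u circ_preds_sub(1)[OF c, of v] by blast
          ultimately show ?thesis using 1(1) by blast
        qed
        show ?thesis using IH by blast
      qed
      also have "\<dots> \<longleftrightarrow> (inp p, v) \<in> E\<^sup>*"
      proof -
        have "inp p \<noteq> v" using False cc(4) p by auto
        then show ?thesis using rtrancl_preds[of "inp p" v E] by simp
      qed
      finally show ?thesis .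
    qed
  qed
  have "val (out T) = (\<exists>q\<in>T. x q)" using v3 T by blast
  also have "\<dots> = (p \<in> T)" unfolding x_def by simp
  finally have e: "val (out T) = (p \<in> T)" .
  have o: "out T \<in> V" using cc(6) T(1) by blast
  show ?thesis using key[OF o] e by simp
qed

lemma card_E_sum:
  assumes "E \<subseteq> V \<times> V" "finite V"
  shows "card E = (\<Sum>v\<in>V. card (preds E v))"
proof -
  have sub: "preds E v \<subseteq> V" for v using assms(1) unfolding preds_def by blast
  have fin: "\<And>v. finite (preds E v)" using finite_subset[OF sub assms(2)] .
  have "E = (\<lambda>(v,u). (u,v)) ` (SIGMA v:V. preds E v)"
  proof (intro equalityI subsetI)
    fix e assume e: "e \<in> E"
    obtain a b where ab: "e = (a,b)" by (cases e)
    then have "(b,a) \<in> (SIGMA v:V. preds E v)" using e assms(1) unfolding preds_def by blast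
    then show "e \<in> (\<lambda>(v,u). (u,v)) ` (SIGMA v:V. preds E v)" using ab by force
  next
    fix e assume "e \<in> (\<lambda>(v,u). (u,v)) ` (SIGMA v:V. preds E v)"
    then obtain x where x: "x \<in> (SIGMA v:V. preds E v)" "e = (\<lambda>(v,u). (u,v)) x" by blast
    obtain a b where "x = (a,b)" by (cases x)
    then show "e \<in> E" using x unfolding preds_def by auto
  qed
  moreover have "inj_on (\<lambda>(v,u). (u,v)) (SIGMA v:V. preds E v)" by (auto simp: inj_on_def)
  ultimately have "card E = card (SIGMA v:V. preds E v)" by (metis card_image)
  also have "\<dots> = (\<Sum>v\<in>V. card (preds E v))" using assms(2) fin by (simp add: card_SigmaI)
  finally show ?thesis .
qed

lemma fanin2_card:
  assumes "E \<subseteq> V \<times> V" "finite V" "fanin2 E"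
  shows "card E \<le> 2 * card (gates V E)"
proof -
  have "card E = (\<Sum>v\<in>V. card (preds E v))" by (rule card_E_sum[OF assms(1,2)])
  also have "\<dots> = (\<Sum>v\<in>gates V E. card (preds E v))"
    unfolding gates_def by (rule sum.mono_neutral_right) (use assms(2) in auto)
  also have "\<dots> \<le> (\<Sum>v\<in>gates V E. 2)" by (rule sum_mono) (use assms(3) in \<open>auto simp: fanin2_def\<close>)
  finally show ?thesis by simp
qed


lemma cube_le_pow3: "(k::nat)^3 \<le> 3^k"
proof (induction k rule: less_induct)
  case (less k)
  show ?case
  proof (cases "k \<le> 3")
    case True
    then have "k = 0 \<or> k = 1 \<or> k = 2 \<or> k = 3" by auto
    then show ?thesis by auto
  next
    case False
    define j where "j = k - 1"
    have j: "k = Suc j" "j \<ge> 3" using False unfolding j_def by auto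
    have "j^3 \<le> 3^j" using less j by simp
    have "(Suc j)^3 = j^3 + 3*j^2 + 3*j + 1" by (simp add: power3_eq_cube power2_eq_square algebra_simps)
    also have "\<dots> \<le> 3 * j^3"
    proof -
      have "3*(j*j) \<le> j*(j*j)" using j(2) mult_le_mono1 by fastforce
      then have "3*j^2 \<le> j^3" by (simp add: power3_eq_cube power2_eq_square)
      moreover have "3*j + 1 \<le> j^3"
      proof -
        have "3 * 3 \<le> j * j" using j(2) mult_le_mono[of 3 j 3 j] by simp
        then have "9 * j \<le> (j * j) * j" using mult_le_mono1 by fastforce
        then have "9 * j \<le> j^3" by (simp add: power3_eq_cube)
        then show ?thesis using j(2) by linarith
      qed
      ultimately show ?thesis by linarith
    qed
    also have "\<dots> \<le> 3 * 3^j" using \<open>j^3 \<le> 3^j\<close> by simp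
    finally show ?thesis using j by simp
  qed
qed

lemma k_pow_le: "real k * (3::real) powr (- real k / 3) \<le> 1"
proof -
  have a: "(real k)^3 \<le> 3^k" using cube_le_pow3[of k] by (metis of_nat_le_iff of_nat_numeral of_nat_power)
  have b: "((3::real) powr (real k / 3))^3 = 3^k"
    by (simp add: powr_realpow[symmetric] powr_powr)
  have c: "(real k)^3 \<le> (3 powr (real k/3))^3" using a b by simp
  have "real k \<le> 3 powr (real k / 3)"
    by (rule power_le_imp_le_base[of _ 2]) (use c in simp_all)
  moreover have "(3::real) powr (- real k / 3) = 1 / 3 powr (real k / 3)"
    by (simp add: powr_minus_divide)
  ultimately show ?thesis by (simp add: divide_le_eq_1)
qed


lemma gibbs:
  fixes A :: "'a set" and G :: "'a \<Rightarrow> real"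
  assumes fin: "finite A" and cA: "card A = m" and m: "m \<ge> 1"
    and s: "(\<Sum>p\<in>A. (3::real) powr (- G p / 3)) \<le> 1"
  shows "real m * ln (real m) \<le> ln 3 / 3 * (\<Sum>p\<in>A. G p)"
proof -
  have mpos: "real m > 0" using m by simp
  have each: "ln (real m) - ln 3 / 3 * G p \<le> real m * 3 powr (- G p / 3) - 1" for p
  proof -
    have pos: "real m * 3 powr (- G p / 3) > 0" using mpos by simp
    have "ln (real m * 3 powr (- G p / 3)) = ln (real m) + ln (3 powr (- G p / 3))"
      using mpos by (simp add: ln_mult)
    also have "ln ((3::real) powr (- G p / 3)) = - G p / 3 * ln 3" by (simp add: ln_powr)
    finally have "ln (real m * 3 powr (- G p / 3)) = ln (real m) - ln 3 / 3 * G p" by simp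
    then show ?thesis using ln_le_minus_one[OF pos] by simp
  qed
  have "(\<Sum>p\<in>A. ln (real m) - ln 3 / 3 * G p) \<le> (\<Sum>p\<in>A. real m * 3 powr (- G p / 3) - 1)"
    by (rule sum_mono) (rule each)
  also have "\<dots> = real m * (\<Sum>p\<in>A. 3 powr (- G p / 3)) - real m"
    using cA by (simp add: sum_subtractf sum_distrib_left)
  also have "\<dots> \<le> real m * 1 - real m" using s mpos by (simp add: mult_left_le)
  finally have "(\<Sum>p\<in>A. ln (real m) - ln 3 / 3 * G p) \<le> 0" by simp
  moreover have "(\<Sum>p\<in>A. ln (real m) - ln 3 / 3 * G p) = real m * ln (real m) - ln 3 / 3 * (\<Sum>p\<in>A. G p)"
    using cA by (simp add: sum_subtractf sum_distrib_left)
  ultimately show ?thesis by simp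
qed


definition Sv :: "pixel set \<Rightarrow> (nat \<times> nat) set \<Rightarrow> (pixel \<Rightarrow> nat) \<Rightarrow> nat \<Rightarrow> pixel set" where
  "Sv I E inp v = {p \<in> I. (inp p, v) \<in> E\<^sup>*}"

definition Dv :: "nat set \<Rightarrow> (nat \<times> nat) set \<Rightarrow> nat \<Rightarrow> nat set" where
  "Dv V E v = {g \<in> V. (g, v) \<in> E\<^sup>*}"

definition Gc :: "pixel set \<Rightarrow> nat set \<Rightarrow> (nat \<times> nat) set \<Rightarrow> (pixel \<Rightarrow> nat) \<Rightarrow> pixel \<Rightarrow> nat \<Rightarrow> nat" where
  "Gc I V E inp p v = (\<Sum>g \<in> {g \<in> Dv V E v. p \<in> Sv I E inp g}. card (preds E g))"

lemma Sv_mono: "(g, v) \<in> E\<^sup>* \<Longrightarrow> Sv I E inp g \<subseteq> Sv I E inp v"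
  unfolding Sv_def by (auto intro: rtrancl_trans)

lemma kraft:
  assumes c: "is_circuit I \<T> V E inp out" and fI: "finite I" and v: "v \<in> V"
  shows "(\<Sum>p\<in>Sv I E inp v. (3::real) powr (- real (Gc I V E inp p v) / 3)) \<le> 1"
  using v
proof (induction v rule: wf_induct_rule[OF circ_wf[OF c]])
  case (1 v)
  note cc = circD[OF c]
  have finS: "finite (Sv I E inp u)" for u unfolding Sv_def using fI by simp
  have finD: "finite (Dv V E u)" for u unfolding Dv_def using cc(1) by simp
  show ?case
  proof (cases "preds E v = {}")
    case True
    then obtain q where q: "q \<in> I" "v = inp q" using cc(7) 1(2) by blast
    have "Sv I E inp v = {q}"
    proof (intro equalityI subsetI)
      fix p assume "p \<in> Sv I E inp v"
      then have "p \<in> I" "inp p = v" unfolding Sv_def using rtrancl_nopreds[OF True] by auto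
      then show "p \<in> {q}" using cc(4) q by (auto dest: inj_onD)
    next
      fix p assume "p \<in> {q}" then show "p \<in> Sv I E inp v" unfolding Sv_def using q by auto
    qed
    moreover have "(3::real) powr (- real (Gc I V E inp q v) / 3) \<le> 3 powr 0"
      by (rule powr_mono) auto
    ultimately show ?thesis by simp
  next
    case False
    let ?C = "preds E v"
    let ?k = "card ?C"
    let ?f = "\<lambda>p u. (3::real) powr (- real (Gc I V E inp p u) / 3)"
    have finC: "finite ?C" and subC: "?C \<subseteq> V" using circ_preds_sub[OF c] by auto
    have kpos: "?k \<ge> 1" using False finC by (simp add: Suc_le_eq card_gt_0_iff)
    have IH: "(\<Sum>p\<in>Sv I E inp c. ?f p c) \<le> 1" if "c \<in> ?C" for c
      using 1(1)[of c] that subC unfolding preds_def by blast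
    have step1: "Gc I V E inp p v \<ge> ?k + Gc I V E inp p c" if cC: "c \<in> ?C" and pc: "p \<in> Sv I E inp c" for p c
    proof -
      have cv: "(c, v) \<in> E" using cC unfolding preds_def by simp
      let ?A = "{g \<in> Dv V E c. p \<in> Sv I E inp g}"
      let ?B = "{g \<in> Dv V E v. p \<in> Sv I E inp g}"
      have vA: "v \<notin> ?A"
      proof
        assume "v \<in> ?A"
        then have "(v, c) \<in> E\<^sup>*" unfolding Dv_def by simp
        then have "(v, v) \<in> E\<^sup>+" using cv by (rule rtrancl_into_trancl1)
        then show False using cc(3) by blast
      qed
      have pv: "p \<in> Sv I E inp v" using pc Sv_mono[of c v E I inp] cv by auto
      have sub: "insert v ?A \<subseteq> ?B"
      proof
        fix g assume "g \<in> insert v ?A"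
        then show "g \<in> ?B"
        proof
          assume "g = v" then show ?thesis using 1(2) pv unfolding Dv_def by simp
        next
          assume g: "g \<in> ?A"
          then have "(g, c) \<in> E\<^sup>*" "g \<in> V" unfolding Dv_def by auto
          then have "(g, v) \<in> E\<^sup>*" using cv by (simp add: rtrancl_into_rtrancl)
          then show ?thesis using g \<open>g \<in> V\<close> unfolding Dv_def by simp
        qed
      qed
      have finB: "finite ?B" using finD[of v] by simp
      have "?k + Gc I V E inp p c = (\<Sum>g\<in>insert v ?A. card (preds E g))"
        unfolding Gc_def using vA finD[of c] by simp
      also have "\<dots> \<le> (\<Sum>g\<in>?B. card (preds E g))" by (rule sum_mono2[OF finB sub]) simp
      finally show ?thesis unfolding Gc_def .
    qed
    have step2: "\<exists>c\<in>?C. p \<in> Sv I E inp c" if p: "p \<in> Sv I E inp v" for p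
    proof -
      have pI: "p \<in> I" and r: "(inp p, v) \<in> E\<^sup>*" using p unfolding Sv_def by auto
      have "inp p \<noteq> v" using False cc(6) pI by auto
      then obtain c where "c \<in> ?C" "(inp p, c) \<in> E\<^sup>*" using r rtrancl_preds[of "inp p" v E] by auto
      then show ?thesis using pI unfolding Sv_def by auto
    qed
    have step3: "?f p v \<le> 3 powr (- real ?k / 3) * (\<Sum>c\<in>{c \<in> ?C. p \<in> Sv I E inp c}. ?f p c)"
      if p: "p \<in> Sv I E inp v" for p
    proof -
      obtain c0 where c0: "c0 \<in> ?C" "p \<in> Sv I E inp c0" using step2[OF p] by blast
      have "?f p v \<le> 3 powr (- real (?k + Gc I V E inp p c0) / 3)"
        by (rule powr_mono) (use step1[OF c0] in auto)
      also have "\<dots> = 3 powr (- real ?k / 3) * ?f p c0"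
        by (simp add: powr_add[symmetric] diff_divide_distrib add_divide_distrib)
      also have "\<dots> \<le> 3 powr (- real ?k / 3) * (\<Sum>c\<in>{c \<in> ?C. p \<in> Sv I E inp c}. ?f p c)"
      proof (rule mult_left_mono)
        show "?f p c0 \<le> (\<Sum>c\<in>{c \<in> ?C. p \<in> Sv I E inp c}. ?f p c)"
          by (rule member_le_sum) (use c0 finC in auto)
      qed simp
      finally show ?thesis .
    qed
    have "(\<Sum>p\<in>Sv I E inp v. ?f p v)
        \<le> (\<Sum>p\<in>Sv I E inp v. 3 powr (- real ?k / 3) * (\<Sum>c\<in>{c \<in> ?C. p \<in> Sv I E inp c}. ?f p c))"
      by (rule sum_mono) (rule step3)
    also have "\<dots> = 3 powr (- real ?k / 3) * (\<Sum>p\<in>Sv I E inp v. \<Sum>c\<in>{c \<in> ?C. p \<in> Sv I E inp c}. ?f p c)"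
      by (simp add: sum_distrib_left)
    also have "(\<Sum>p\<in>Sv I E inp v. \<Sum>c\<in>{c \<in> ?C. p \<in> Sv I E inp c}. ?f p c)
        = (\<Sum>c\<in>?C. \<Sum>p\<in>{p \<in> Sv I E inp v. p \<in> Sv I E inp c}. ?f p c)"
      by (rule sum.swap_restrict[OF finS finC])
    also have "\<dots> = (\<Sum>c\<in>?C. \<Sum>p\<in>Sv I E inp c. ?f p c)"
    proof (rule sum.cong[OF refl])
      fix c assume "c \<in> ?C"
      then have "Sv I E inp c \<subseteq> Sv I E inp v" using Sv_mono[of c v E I inp] unfolding preds_def by auto
      then have "{p \<in> Sv I E inp v. p \<in> Sv I E inp c} = Sv I E inp c" by blast
      then show "(\<Sum>p\<in>{p \<in> Sv I E inp v. p \<in> Sv I E inp c}. ?f p c) = (\<Sum>p\<in>Sv I E inp c. ?f p c)" by simp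
    qed
    also have "3 powr (- real ?k / 3) * \<dots> \<le> 3 powr (- real ?k / 3) * (\<Sum>c\<in>?C. 1)"
    proof (rule mult_left_mono)
      show "(\<Sum>c\<in>?C. \<Sum>p\<in>Sv I E inp c. ?f p c) \<le> (\<Sum>c\<in>?C. 1)"
        by (rule sum_mono) (rule IH)
    qed simp
    also have "\<dots> = real ?k * 3 powr (- real ?k / 3)" by simp
    also have "\<dots> \<le> 1" by (rule k_pow_le)
    finally show ?thesis .
  qed
qed


lemma edge_lb:
  assumes c: "is_circuit I \<T> V E inp out"
    and reach: "\<And>T p. T \<in> \<T> \<Longrightarrow> p \<in> I \<Longrightarrow> (p \<in> T \<longleftrightarrow> (inp p, out T) \<in> E\<^sup>*)"
    and fI: "finite I"
    and TI: "\<And>T. T \<in> \<T> \<Longrightarrow> T \<subseteq> I"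
    and Ts: "Ts \<subseteq> \<T>" and finTs: "finite Ts"
    and mT: "\<And>T. T \<in> Ts \<Longrightarrow> card (T \<inter> B) = m"
    and m: "m \<ge> 1"
    and cnt: "\<And>S. S \<subseteq> I \<Longrightarrow> S \<inter> B \<noteq> {} \<Longrightarrow> card {T \<in> Ts. S \<subseteq> T} * card (S \<inter> B) \<le> M"
  shows "real (card Ts) * (3 * real m * ln (real m) / ln 3) \<le> real M * real (card E)"
proof -
  note cc = circD[OF c]
  let ?S = "Sv I E inp"
  let ?D = "Dv V E"
  let ?kk = "\<lambda>g. card (preds E g)"
  have finS: "finite (?S u)" for u unfolding Sv_def using fI by simp
  have SI: "?S u \<subseteq> I" for u unfolding Sv_def by auto
  have finD: "finite (?D u)" for u unfolding Dv_def using cc(1) by simp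
  have Sv_out: "?S (out T) = T" if "T \<in> \<T>" for T
    unfolding Sv_def using reach[OF that] TI[OF that] by auto
  have outV: "out T \<in> V" if "T \<in> \<T>" for T using cc(9) that by blast
  define H where "H T = (\<Sum>g\<in>?D (out T). ?kk g * card (?S g \<inter> B))" for T
  have perT: "3 * real m * ln (real m) / ln 3 \<le> real (H T)" if T: "T \<in> Ts" for T
  proof -
    have TT: "T \<in> \<T>" using T Ts by blast
    let ?A = "T \<inter> B"
    have finT: "finite T" using TI[OF TT] fI finite_subset by blast
    have finA: "finite ?A" using finT by simp
    let ?f = "\<lambda>p. (3::real) powr (- real (Gc I V E inp p (out T)) / 3)"
    have "(\<Sum>p\<in>?A. ?f p) \<le> (\<Sum>p\<in>T. ?f p)" by (rule sum_mono2[OF finT]) auto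
    also have "\<dots> \<le> 1" using kraft[OF c fI outV[OF TT]] Sv_out[OF TT] by simp
    finally have s1: "(\<Sum>p\<in>?A. ?f p) \<le> 1" .
    have g: "real m * ln (real m) \<le> ln 3 / 3 * (\<Sum>p\<in>?A. real (Gc I V E inp p (out T)))"
      by (rule gibbs[OF finA mT[OF T] m]) (use s1 in simp)
    have "(\<Sum>p\<in>?A. Gc I V E inp p (out T))
        = (\<Sum>p\<in>?A. \<Sum>g\<in>{g \<in> ?D (out T). p \<in> ?S g}. ?kk g)" unfolding Gc_def by simp
    also have "\<dots> = (\<Sum>g\<in>?D (out T). \<Sum>p\<in>{p \<in> ?A. p \<in> ?S g}. ?kk g)"
      by (rule sum.swap_restrict[OF finA finD])
    also have "\<dots> = (\<Sum>g\<in>?D (out T). ?kk g * card {p \<in> ?A. p \<in> ?S g})" by (simp add: mult.commute)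
    also have "\<dots> \<le> H T" unfolding H_def
    proof (rule sum_mono)
      fix g assume "g \<in> ?D (out T)"
      have "{p \<in> ?A. p \<in> ?S g} \<subseteq> ?S g \<inter> B" by blast
      then have "card {p \<in> ?A. p \<in> ?S g} \<le> card (?S g \<inter> B)" by (rule card_mono[rotated]) (use finS in simp)
      then show "?kk g * card {p \<in> ?A. p \<in> ?S g} \<le> ?kk g * card (?S g \<inter> B)" by simp
    qed
    finally have hh: "(\<Sum>p\<in>?A. Gc I V E inp p (out T)) \<le> H T" .
    have "(\<Sum>p\<in>?A. real (Gc I V E inp p (out T))) \<le> real (H T)"
      using hh by (metis of_nat_le_iff of_nat_sum)
    then have "real m * ln (real m) \<le> ln 3 / 3 * real (H T)" using g
      by (smt (verit) ln_gt_zero mult_left_mono divide_nonneg_nonneg)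
    then show ?thesis by (simp add: field_simps)
  qed
  have sumH: "(\<Sum>T\<in>Ts. H T) \<le> M * card E"
  proof -
    let ?w = "\<lambda>g. ?kk g * card (?S g \<inter> B)"
    have "(\<Sum>T\<in>Ts. H T) = (\<Sum>T\<in>Ts. \<Sum>g\<in>{g \<in> V. (g, out T) \<in> E\<^sup>*}. ?w g)"
      unfolding H_def Dv_def by simp
    also have "\<dots> = (\<Sum>g\<in>V. \<Sum>T\<in>{T \<in> Ts. (g, out T) \<in> E\<^sup>*}. ?w g)"
      by (rule sum.swap_restrict[OF finTs cc(1)])
    also have "\<dots> = (\<Sum>g\<in>V. ?w g * card {T \<in> Ts. (g, out T) \<in> E\<^sup>*})" by (simp add: mult.commute)
    also have "\<dots> \<le> (\<Sum>g\<in>V. ?kk g * M)"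
    proof (rule sum_mono)
      fix g assume gV: "g \<in> V"
      show "?w g * card {T \<in> Ts. (g, out T) \<in> E\<^sup>*} \<le> ?kk g * M"
      proof (cases "?S g \<inter> B = {}")
        case True then show ?thesis by simp
      next
        case False
        have "{T \<in> Ts. (g, out T) \<in> E\<^sup>*} \<subseteq> {T \<in> Ts. ?S g \<subseteq> T}"
        proof
          fix T assume "T \<in> {T \<in> Ts. (g, out T) \<in> E\<^sup>*}"
          then have T: "T \<in> Ts" "(g, out T) \<in> E\<^sup>*" by auto
          have "?S g \<subseteq> ?S (out T)" by (rule Sv_mono[OF T(2)])
          then have "?S g \<subseteq> T" using Sv_out T(1) Ts by blast
          then show "T \<in> {T \<in> Ts. ?S g \<subseteq> T}" using T by simp
        qed
        then have "card {T \<in> Ts. (g, out T) \<in> E\<^sup>*} \<le> card {T \<in> Ts. ?S g \<subseteq> T}"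
          by (rule card_mono[rotated]) (use finTs in simp)
        then have "card {T \<in> Ts. (g, out T) \<in> E\<^sup>*} * card (?S g \<inter> B) \<le> M"
          using cnt[OF SI False] by (meson le_trans mult_le_mono1)
        then have "?kk g * (card {T \<in> Ts. (g, out T) \<in> E\<^sup>*} * card (?S g \<inter> B)) \<le> ?kk g * M"
          by (rule mult_le_mono2)
        then show ?thesis by (simp add: ac_simps)
      qed
    qed
    also have "\<dots> = M * card E" using card_E_sum[OF cc(2,1)] by (simp add: sum_distrib_left[symmetric] mult.commute)
    finally show ?thesis .
  qed
  have "real (card Ts) * (3 * real m * ln (real m) / ln 3) = (\<Sum>T\<in>Ts. 3 * real m * ln (real m) / ln 3)"
    by simp
  also have "\<dots> \<le> (\<Sum>T\<in>Ts. real (H T))" by (rule sum_mono) (rule perT)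
  also have "\<dots> = real (\<Sum>T\<in>Ts. H T)" by simp
  also have "\<dots> \<le> real (M * card E)" using sumH by (simp only: of_nat_le_iff)
  finally show ?thesis by simp
qed


lemma abstract_circuit:
  fixes N :: "pixel set set" and I :: "pixel set" and \<T> :: "pixel set set"
  assumes finN: "finite N" and NI: "\<forall>X\<in>N. X \<subseteq> I" and ne: "{} \<notin> N" and sing: "\<forall>p\<in>I. {p} \<in> N"
    and TN: "\<T> \<subseteq> N" and cardN: "\<forall>X\<in>N. card X \<le> m" and cardT: "\<forall>T\<in>\<T>. card T = m"
    and fI: "finite I"
    and dec: "\<forall>X\<in>N. 2 \<le> card X \<longrightarrow> (\<exists>Y Z. Y \<in> N \<and> Z \<in> N \<and> Y \<inter> Z = {} \<and> X = Y \<union> Z)"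
  shows "\<exists>V E inp out. is_circuit I \<T> V E inp out \<and> fanin2 E \<and> computes_OR I \<T> V E inp out
           \<and> computes_SUM I \<T> V E inp out \<and> card (gates V E) = card {X\<in>N. 2 \<le> card X}"
proof -
  obtain e :: "pixel set \<Rightarrow> nat" and n where e: "e ` N = {i. i < n}" "inj_on e N"
    using finite_imp_inj_to_nat_seg[OF finN] by blast
  define G where "G = {X\<in>N. 2 \<le> card X}"
  define dd where "dd X = (SOME yz. fst yz \<in> N \<and> snd yz \<in> N \<and> fst yz \<inter> snd yz = {} \<and> X = fst yz \<union> snd yz)" for X
  define Y where "Y X = fst (dd X)" for X
  define Z where "Z X = snd (dd X)" for X
  have D1: "Y X \<in> N \<and> Z X \<in> N \<and> Y X \<inter> Z X = {} \<and> X = Y X \<union> Z X" if "X \<in> G" for X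
  proof -
    have XN: "X \<in> N" "2 \<le> card X" using that unfolding G_def by auto
    obtain Y0 Z0 where "Y0 \<in> N" "Z0 \<in> N" "Y0 \<inter> Z0 = {}" "X = Y0 \<union> Z0"
      using dec XN by blast
    then have "\<exists>yz. fst yz \<in> N \<and> snd yz \<in> N \<and> fst yz \<inter> snd yz = {} \<and> X = fst yz \<union> snd yz"
      by (intro exI[of _ "(Y0,Z0)"]) simp
    then show ?thesis unfolding Y_def Z_def dd_def by (rule someI_ex)
  qed
  have finX: "finite X" if "X \<in> N" for X using NI that fI finite_subset by blast
  have D2: "card (Y X) < card X \<and> card (Z X) < card X \<and> Y X \<noteq> Z X" if X: "X \<in> G" for X
  proof -
    have d: "Y X \<in> N" "Z X \<in> N" "Y X \<inter> Z X = {}" "X = Y X \<union> Z X" using D1[OF X] by auto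
    have XN: "X \<in> N" using X unfolding G_def by simp
    have ne1: "Y X \<noteq> {}" "Z X \<noteq> {}" using d(1,2) ne by auto
    have "Y X \<subset> X" using d ne1 by blast
    then have 1: "card (Y X) < card X" using finX[OF XN] by (rule psubset_card_mono[rotated])
    have "Z X \<subset> X" using d ne1 by blast
    then have 2: "card (Z X) < card X" using finX[OF XN] by (rule psubset_card_mono[rotated])
    have 3: "Y X \<noteq> Z X" using d(3) ne1 by blast
    show ?thesis using 1 2 3 by simp
  qed
  define V where "V = e ` N"
  define E where "E = (\<Union>X\<in>G. {(e (Y X), e X), (e (Z X), e X)})"
  define inp where "inp p = e {p}" for p :: pixel
  define out where "out T = e T" for T :: "pixel set"
  define dcd where "dcd v = the_inv_into N e v" for v
  have dcd_e: "dcd (e X) = X" if "X \<in> N" for X unfolding dcd_def using e(2) that by (rule the_inv_into_f_f)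
  have GN: "G \<subseteq> N" unfolding G_def by auto
  have Emem: "(u, v) \<in> E \<longleftrightarrow> (\<exists>X\<in>G. v = e X \<and> (u = e (Y X) \<or> u = e (Z X)))" for u v
    unfolding E_def by blast
  have preds_G: "preds E (e X) = {e (Y X), e (Z X)}" if "X \<in> G" for X
  proof (intro equalityI subsetI)
    fix u assume "u \<in> preds E (e X)"
    then obtain X' where X': "X' \<in> G" "e X = e X'" "u = e (Y X') \<or> u = e (Z X')"
      unfolding preds_def Emem by blast
    have "X = X'" using e(2) X'(1,2) that GN by (meson inj_onD subsetD)
    then show "u \<in> {e (Y X), e (Z X)}" using X' by auto
  next
    fix u assume "u \<in> {e (Y X), e (Z X)}"
    then show "u \<in> preds E (e X)" unfolding preds_def Emem using that by blast
  qed
  have preds_nG: "preds E v = {}" if "\<forall>X\<in>G. v \<noteq> e X" for v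
    unfolding preds_def Emem using that by blast
  have preds_N: "preds E (e X) = {}" if "X \<in> N" "X \<notin> G" for X
  proof (rule preds_nG, intro ballI)
    fix X' assume X': "X' \<in> G"
    show "e X \<noteq> e X'"
    proof
      assume "e X = e X'"
      then have "X = X'" using e(2) that(1) X' GN by (meson inj_onD subsetD)
      then show False using that X' by simp
    qed
  qed
  have card1: "\<exists>p\<in>I. X = {p}" if "X \<in> N" "X \<notin> G" for X
  proof -
    have "card X \<le> 1" using that unfolding G_def by simp
    moreover have "card X \<noteq> 0" using finX[OF that(1)] ne that(1) by auto
    ultimately have "card X = 1" by simp
    then obtain p where "X = {p}" by (rule card_1_singletonE)
    then show ?thesis using NI that(1) by auto
  qed
  have c1: "finite V" unfolding V_def using finN by simp
  have c2: "E \<subseteq> V \<times> V"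
  proof
    fix x assume "x \<in> E"
    then obtain u v where x: "x = (u,v)" "(u,v) \<in> E" by (cases x) auto
    then obtain X where X: "X \<in> G" "v = e X" "u = e (Y X) \<or> u = e (Z X)" unfolding Emem by blast
    have "X \<in> N" "Y X \<in> N" "Z X \<in> N" using X(1) GN D1[OF X(1)] by auto
    then have "u \<in> V" "v \<in> V" unfolding V_def using X(2,3) by auto
    then show "x \<in> V \<times> V" using x by simp
  qed
  have c3: "\<forall>v. (v, v) \<notin> E\<^sup>+"
  proof -
    define R where "R = {(u,v). card (dcd u) < card (dcd v)}"
    have "E \<subseteq> R"
    proof
      fix x assume "x \<in> E"
      then obtain u v where x: "x = (u,v)" "(u,v) \<in> E" by (cases x) auto
      then obtain X where X: "X \<in> G" "v = e X" "u = e (Y X) \<or> u = e (Z X)" unfolding Emem by blast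
      have XN: "X \<in> N" "Y X \<in> N" "Z X \<in> N" using X(1) GN D1[OF X(1)] by auto
      have dv: "dcd v = X" using dcd_e[OF XN(1)] X(2) by simp
      have du: "card (dcd u) < card X"
      proof (cases "u = e (Y X)")
        case True
        then have "dcd u = Y X" using dcd_e[OF XN(2)] by simp
        then show ?thesis using D2[OF X(1)] by simp
      next
        case False
        then have "u = e (Z X)" using X(3) by simp
        then have "dcd u = Z X" using dcd_e[OF XN(3)] by simp
        then show ?thesis using D2[OF X(1)] by simp
      qed
      show "x \<in> R" unfolding R_def using x(1) dv du by simp
    qed
    have "trans R" unfolding R_def by (rule transI) (auto intro: less_trans)
    show ?thesis
    proof (intro allI notI)
      fix v assume "(v,v) \<in> E\<^sup>+"
      then have "(v,v) \<in> R\<^sup>+" using \<open>E \<subseteq> R\<close> by (rule trancl_mono)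
      then have "(v,v) \<in> R" using trancl_id[OF \<open>trans R\<close>] by simp
      then show False unfolding R_def by simp
    qed
  qed
  have c4: "inj_on inp I"
  proof (rule inj_onI)
    fix p q assume "p \<in> I" "q \<in> I" "inp p = inp q"
    then have "{p} = {q}" using e(2) sing unfolding inp_def by (meson inj_onD)
    then show "p = q" by simp
  qed
  have c5: "inp ` I \<subseteq> V" unfolding inp_def V_def using sing by blast
  have c6: "\<forall>p\<in>I. preds E (inp p) = {}"
  proof
    fix p assume p: "p \<in> I"
    have "{p} \<notin> G" unfolding G_def by simp
    then show "preds E (inp p) = {}" unfolding inp_def using preds_N sing p by blast
  qed
  have c7: "\<forall>v\<in>V. preds E v = {} \<longrightarrow> v \<in> inp ` I"
  proof (intro ballI impI)
    fix v assume v: "v \<in> V" "preds E v = {}"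
    then obtain X where X: "X \<in> N" "v = e X" unfolding V_def by blast
    have "X \<notin> G" using v(2) X preds_G by fastforce
    then obtain p where "p \<in> I" "X = {p}" using card1 X(1) by blast
    then show "v \<in> inp ` I" unfolding inp_def using X by blast
  qed
  have c8: "inj_on out \<T>" unfolding out_def using e(2) TN by (rule inj_on_subset)
  have c9: "out ` \<T> \<subseteq> V" unfolding out_def V_def using TN by blast
  have c10: "\<forall>T\<in>\<T>. \<forall>u. (out T, u) \<notin> E"
  proof (intro ballI allI notI)
    fix T u assume T: "T \<in> \<T>" and "(out T, u) \<in> E"
    then obtain X where X: "X \<in> G" "out T = e (Y X) \<or> out T = e (Z X)" unfolding Emem by blast
    have TN': "T \<in> N" using T TN by blast
    have "T = Y X \<or> T = Z X" using X D1[OF X(1)] e(2) TN' unfolding out_def by (meson inj_onD)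
    then have "card T < card X" using D2[OF X(1)] by auto
    moreover have "card X \<le> m" using cardN X(1) GN by blast
    ultimately show False using cardT T by fastforce
  qed
  have circ: "is_circuit I \<T> V E inp out"
    unfolding is_circuit_def by (intro conjI c1 c2 c3 c4 c5 c6 c7 c8 c9 c10)
  have fan: "fanin2 E"
    unfolding fanin2_def
  proof
    fix v
    show "card (preds E v) \<le> 2"
    proof (cases "\<exists>X\<in>G. v = e X")
      case True
      then obtain X where "X \<in> G" "v = e X" by blast
      then have "preds E v = {e (Y X), e (Z X)}" using preds_G by simp
      then show ?thesis by (simp add: card_insert_le_m1)
    next
      case False
      then show ?thesis using preds_nG by auto
    qed
  qed
  have gates_eq: "gates V E = e ` G"
  proof (intro equalityI subsetI)
    fix v assume "v \<in> gates V E"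
    then have v: "v \<in> V" "preds E v \<noteq> {}" unfolding gates_def by auto
    then obtain X where X: "X \<in> N" "v = e X" unfolding V_def by blast
    have "X \<in> G" using preds_N X v(2) by blast
    then show "v \<in> e ` G" using X by blast
  next
    fix v assume "v \<in> e ` G"
    then obtain X where X: "X \<in> G" "v = e X" by blast
    then show "v \<in> gates V E" unfolding gates_def V_def using preds_G GN by auto
  qed
  have cardg: "card (gates V E) = card {X\<in>N. 2 \<le> card X}"
    unfolding gates_eq G_def[symmetric] using inj_on_subset[OF e(2) GN] by (rule card_image)
  have predsv: "v \<in> V \<Longrightarrow> preds E v \<noteq> {} \<Longrightarrow> \<exists>X\<in>G. v = e X \<and> preds E v = {e (Y X), e (Z X)}" for v
  proof -
    assume v: "v \<in> V" "preds E v \<noteq> {}"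
    then obtain X where X: "X \<in> N" "v = e X" unfolding V_def by blast
    have "X \<in> G" using preds_N[OF X(1)] v(2) X(2) by blast
    then show ?thesis using preds_G X(2) by blast
  qed
  have sum_ok: "computes_SUM I \<T> V E inp out"
    unfolding computes_SUM_def
  proof
    fix x :: "pixel \<Rightarrow> nat"
    define val where "val v = (\<Sum>p\<in>dcd v. x p)" for v
    have g: "val v = (\<Sum>u\<in>preds E v. val u)" if vv: "v \<in> V" "preds E v \<noteq> {}" for v
    proof -
      obtain X where X: "X \<in> G" "v = e X" "preds E v = {e (Y X), e (Z X)}" using predsv[OF vv] by blast
      have d: "Y X \<in> N" "Z X \<in> N" "Y X \<inter> Z X = {}" "X = Y X \<union> Z X" using D1[OF X(1)] by auto
      have ne2: "e (Y X) \<noteq> e (Z X)"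
      proof
        assume "e (Y X) = e (Z X)"
        then have "Y X = Z X" using inj_onD[OF e(2) _ d(1) d(2)] by blast
        then show False using D2[OF X(1)] by simp
      qed
      have "(\<Sum>u\<in>preds E v. val u) = val (e (Y X)) + val (e (Z X))" using X(3) ne2 by simp
      also have "\<dots> = (\<Sum>p\<in>Y X. x p) + (\<Sum>p\<in>Z X. x p)" unfolding val_def using dcd_e[OF d(1)] dcd_e[OF d(2)] by simp
      also have "\<dots> = (\<Sum>p\<in>Y X \<union> Z X. x p)" using d(3) finX[OF d(1)] finX[OF d(2)] by (simp add: sum.union_disjoint)
      also have "\<dots> = (\<Sum>p\<in>X. x p)" using d(4) by simp
      also have "\<dots> = val v" unfolding val_def using X(2) dcd_e[of X] X(1) GN by auto
      finally show ?thesis by simp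
    qed
    show "\<exists>val. (\<forall>p\<in>I. val (inp p) = x p) \<and>
        (\<forall>v\<in>V. preds E v \<noteq> {} \<longrightarrow> val v = (\<Sum>u\<in>preds E v. val u)) \<and>
        (\<forall>T\<in>\<T>. val (out T) = (\<Sum>p\<in>T. x p))"
    proof (intro exI[of _ val] conjI ballI impI)
      fix p assume "p \<in> I" then show "val (inp p) = x p" unfolding val_def inp_def using dcd_e sing by simp
    next
      fix v assume "v \<in> V" "preds E v \<noteq> {}" then show "val v = (\<Sum>u\<in>preds E v. val u)" by (rule g)
    next
      fix T assume "T \<in> \<T>" then show "val (out T) = (\<Sum>p\<in>T. x p)" unfolding val_def out_def using dcd_e TN by auto
    qed
  qed
  have or_ok: "computes_OR I \<T> V E inp out"
    unfolding computes_OR_def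
  proof
    fix x :: "pixel \<Rightarrow> bool"
    define val where "val v = (\<exists>p\<in>dcd v. x p)" for v
    have g: "val v = (\<exists>u\<in>preds E v. val u)" if vv: "v \<in> V" "preds E v \<noteq> {}" for v
    proof -
      obtain X where X: "X \<in> G" "v = e X" "preds E v = {e (Y X), e (Z X)}" using predsv[OF vv] by blast
      have d: "Y X \<in> N" "Z X \<in> N" "Y X \<inter> Z X = {}" "X = Y X \<union> Z X" using D1[OF X(1)] by auto
      have "(\<exists>u\<in>preds E v. val u) = (val (e (Y X)) \<or> val (e (Z X)))" using X(3) by simp
      also have "\<dots> = ((\<exists>p\<in>Y X. x p) \<or> (\<exists>p\<in>Z X. x p))" unfolding val_def using dcd_e[OF d(1)] dcd_e[OF d(2)] by simp
      also have "\<dots> = (\<exists>p\<in>X. x p)" using d(4) by blast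
      also have "\<dots> = val v" unfolding val_def using X(2) dcd_e[of X] X(1) GN by auto
      finally show ?thesis by simp
    qed
    show "\<exists>val. (\<forall>p\<in>I. val (inp p) = x p) \<and>
        (\<forall>v\<in>V. preds E v \<noteq> {} \<longrightarrow> val v = (\<exists>u\<in>preds E v. val u)) \<and>
        (\<forall>T\<in>\<T>. val (out T) = (\<exists>p\<in>T. x p))"
    proof (intro exI[of _ val] conjI ballI impI)
      fix p assume "p \<in> I" then show "val (inp p) = x p" unfolding val_def inp_def using dcd_e sing by simp
    next
      fix v assume "v \<in> V" "preds E v \<noteq> {}" then show "val v = (\<exists>u\<in>preds E v. val u)" by (rule g)
    next
      fix T assume "T \<in> \<T>" then show "val (out T) = (\<exists>p\<in>T. x p)" unfolding val_def out_def using dcd_e TN by auto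
    qed
  qed
  show ?thesis
    apply (rule exI[of _ V], rule exI[of _ E], rule exI[of _ inp], rule exI[of _ out])
    using circ fan or_ok sum_ok cardg by (intro conjI)
qed


definition Blk :: "nat \<Rightarrow> nat \<Rightarrow> nat \<Rightarrow> nat \<Rightarrow> pixel set set" where
  "Blk w h d k = (\<lambda>(b,P). tran w (b*2^k) 0 P \<inter> img h w) ` ({..<2^(d-k)} \<times> L w k)"

definition NN :: "nat \<Rightarrow> nat \<Rightarrow> nat \<Rightarrow> pixel set set" where
  "NN w h d = (\<Union>k\<in>{..d}. Blk w h d k) - {{}}"

lemma Blk_mem: "b < 2^(d-k) \<Longrightarrow> P \<in> L w k \<Longrightarrow> tran w (b*2^k) 0 P \<inter> img h w \<in> Blk w h d k"
  unfolding Blk_def by (rule image_eqI[of _ _ "(b,P)"]) auto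

lemma BlkE:
  assumes "X \<in> Blk w h d k"
  obtains b P where "b < 2^(d-k)" "P \<in> L w k" "X = tran w (b*2^k) 0 P \<inter> img h w"
  using assms unfolding Blk_def by auto

lemma tran_tran: "tran w a 0 (tran w b c Q) = tran w (a+b) 0 (tran w 0 c Q)"
  unfolding tran_def image_comp by (rule image_cong) (auto simp: add_ac)

lemma tran00: "Q \<subseteq> UNIV \<times> {..<w} \<Longrightarrow> tran w 0 0 Q = Q"
proof -
  assume a: "Q \<subseteq> UNIV \<times> {..<w}"
  have "tran w 0 0 Q = (\<lambda>x. x) ` Q" unfolding tran_def
    by (rule image_cong) (use a in auto)
  then show ?thesis by simp
qed

lemma tran_rows: "(i,j) \<in> tran w a 0 P \<Longrightarrow> is_pat n w P \<Longrightarrow> a \<le> i \<and> i < a + n"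
  unfolding tran_mem using is_pat_mem(1) by fastforce

lemma tran_fst_inj:
  assumes "is_pat n w P" "(i,j) \<in> tran w a 0 P" "(i,j') \<in> tran w a 0 P"
  shows "j = j'"
proof -
  obtain j1 where "(i-a, j1) \<in> P" "j = (j1 + 0) mod w" using assms(2) unfolding tran_mem by blast
  moreover obtain j2 where "(i-a, j2) \<in> P" "j' = (j2 + 0) mod w" using assms(3) unfolding tran_mem by blast
  ultimately show ?thesis using col_unique[OF assms(1)] by metis
qed

lemma Blk_card:
  assumes "X \<in> Blk w h d k" "w > 0"
  shows "card X \<le> h"
proof -
  obtain b P where bp: "P \<in> L w k" "X = tran w (b*2^k) 0 P \<inter> img h w" using BlkE[OF assms(1)] by metis
  have pP: "is_pat (2^k) w P" using L_pat[OF assms(2) bp(1)] .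
  have "inj_on fst X"
  proof (rule inj_onI)
    fix x y assume "x \<in> X" "y \<in> X" "fst x = fst y"
    then show "x = y" using tran_fst_inj[OF pP, of "fst x" "snd x" "b*2^k" "snd y"] bp(2)
      by (cases x, cases y) auto
  qed
  moreover have "fst ` X \<subseteq> {..<h}" using bp(2) unfolding img_def by auto
  ultimately have "card X \<le> card {..<h}"
    by (metis card_image card_mono finite_lessThan)
  then show ?thesis by simp
qed

lemma pat_restrict:
  assumes "is_pat n w P" "h \<le> n"
  shows "is_pat h w (P \<inter> img h w)"
  unfolding is_pat_def
proof (intro conjI allI impI)
  show "P \<inter> img h w \<subseteq> {..<h} \<times> {..<w}" unfolding img_def by auto
next
  fix i assume i: "i < h"
  then have "i < n" using assms(2) by simp
  show "\<exists>!j. (i, j) \<in> P \<inter> img h w"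
  proof (rule ex1I)
    show "(i, col_at P i) \<in> P \<inter> img h w" using is_pat_col[OF assms(1) \<open>i < n\<close>] i unfolding img_def by auto
  next
    fix j assume "(i,j) \<in> P \<inter> img h w"
    then show "j = col_at P i" using is_pat_mem(3)[OF assms(1)] by auto
  qed
qed


lemma Blk0_card: "X \<in> Blk w h d 0 \<Longrightarrow> card X \<le> 1"
proof -
  assume "X \<in> Blk w h d 0"
  then obtain b P where bp: "P \<in> L w 0" "X = tran w (b*2^0) 0 P \<inter> img h w" by (rule BlkE)
  then obtain j where "P = {(0,j)}" by auto
  then have "tran w (b*2^0) 0 P = {(b, j mod w)}" unfolding tran_def by simp
  then have "X \<subseteq> {(b, j mod w)}" using bp by auto
  then have "card X \<le> card {(b, j mod w)}" by (rule card_mono[rotated]) simp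
  then show ?thesis by simp
qed

lemma Blk_finite: "finite (Blk w h d k)"
  unfolding Blk_def using L_finite[of w k] by simp

lemma Blk_dec:
  assumes w: "w \<ge> 2" and "k \<le> d" "b < 2^(d-k)" "P \<in> L w k" "X = tran w (b*2^k) 0 P \<inter> img h w" "2 \<le> card X"
  shows "\<exists>Y Z. Y \<in> NN w h d \<and> Z \<in> NN w h d \<and> Y \<inter> Z = {} \<and> X = Y \<union> Z"
  using assms(2-)
proof (induction k arbitrary: b P X)
  case 0
  have "X \<in> Blk w h d 0" using Blk_mem[OF 0(2,3), of h] 0(4) by simp
  from Blk0_card[OF this] show ?case using 0(5) by simp
next
  case (Suc k)
  have w0: "w > 0" using w by simp
  obtain Q s where Q: "Q \<in> L w k" "s \<in> {0,1}" "P = U w k Q s" by (rule L_SucE[OF Suc.prems(3)])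
  have pQ: "is_pat (2^k) w Q" using L_pat[OF w0 Q(1)] .
  let ?c = "Delta w Q + s"
  let ?Q' = "tran w 0 ?c Q"
  have pQ': "is_pat (2^k) w ?Q'" using is_pat_tran0(1)[OF pQ w0] .
  have Q'L: "?Q' \<in> L w k" using L_shift[OF w0 Q(1)] .
  define Y where "Y = tran w ((2*b)*2^k) 0 Q \<inter> img h w"
  define Z where "Z = tran w ((2*b+1)*2^k) 0 ?Q' \<inter> img h w"
  have kd: "k \<le> d" using Suc.prems(1) by simp
  have "d - k = Suc (d - Suc k)" using Suc.prems(1) by simp
  then have pw: "(2::nat)^(d-k) = 2 * 2^(d - Suc k)" by simp
  have b1: "2*b < 2^(d-k)" "2*b+1 < 2^(d-k)" using Suc.prems(2) pw by auto
  have a_eq: "b * 2^Suc k = (2*b)*2^k" by simp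
  have a2: "(2*b)*2^k + 2^k = (2*b+1)*2^k" by simp
  have e1: "tran w (b*2^Suc k) 0 P = tran w ((2*b)*2^k) 0 Q \<union> tran w ((2*b)*2^k + 2^k) 0 ?Q'"
    unfolding Q(3) U_def tran_Un a_eq tran_tran[of w "(2*b)*2^k" "2^k"] by (rule refl)
  have e2: "tran w (b*2^Suc k) 0 P = tran w ((2*b)*2^k) 0 Q \<union> tran w ((2*b+1)*2^k) 0 ?Q'"
    using e1 unfolding a2 .
  have XYZ: "X = Y \<union> Z" unfolding Y_def Z_def Suc.prems(4) e2 by (simp only: Int_Un_distrib2)
  have YZ: "Y \<inter> Z = {}"
  proof (rule ccontr)
    assume "Y \<inter> Z \<noteq> {}"
    then obtain i j where "(i,j) \<in> Y" "(i,j) \<in> Z" by auto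
    then have "i < (2*b)*2^k + 2^k" "(2*b+1)*2^k \<le> i"
      using tran_rows[OF _ pQ, of i j] tran_rows[OF _ pQ', of i j] unfolding Y_def Z_def by auto
    then show False by simp
  qed
  have YB: "Y \<in> Blk w h d k" unfolding Y_def by (rule Blk_mem[OF b1(1) Q(1)])
  have ZB: "Z \<in> Blk w h d k" unfolding Z_def by (rule Blk_mem[OF b1(2) Q'L])
  show ?case
  proof (cases "Y = {}")
    case True
    then have "X = Z" using XYZ by simp
    then have "2 \<le> card Z" using Suc.prems(5) by simp
    then have "\<exists>Y Z'. Y \<in> NN w h d \<and> Z' \<in> NN w h d \<and> Y \<inter> Z' = {} \<and> Z = Y \<union> Z'"
      by (rule Suc.IH[OF kd b1(2) Q'L Z_def])
    then show ?thesis using \<open>X = Z\<close> by simp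
  next
    case Yne: False
    show ?thesis
    proof (cases "Z = {}")
      case True
      then have "X = Y" using XYZ by simp
      then have "2 \<le> card Y" using Suc.prems(5) by simp
      then have "\<exists>Y' Z. Y' \<in> NN w h d \<and> Z \<in> NN w h d \<and> Y' \<inter> Z = {} \<and> Y = Y' \<union> Z"
        by (rule Suc.IH[OF kd b1(1) Q(1) Y_def])
      then show ?thesis using \<open>X = Y\<close> by simp
    next
      case False
      have "Y \<in> NN w h d" "Z \<in> NN w h d" unfolding NN_def using YB ZB kd Yne False by auto
      then show ?thesis using XYZ YZ by blast
    qed
  qed
qed


lemma img_finite: "finite (img h w)"
proof -
  have "img h w = {..<h} \<times> {..<w}" unfolding img_def by auto
  then show ?thesis by simp
qed

lemma Blk_card_le: "k \<le> d \<Longrightarrow> w \<ge> 2 \<Longrightarrow> card (Blk w h d k) \<le> w * 2^d"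
proof -
  assume kd: "k \<le> d" and w: "w \<ge> 2"
  have "card (Blk w h d k) \<le> card ({..<(2::nat)^(d-k)} \<times> L w k)"
    unfolding Blk_def by (rule card_image_le) (simp add: L_finite)
  also have "\<dots> = 2^(d-k) * (w * 2^k)" by (simp add: card_cartesian_product L_card[OF w])
  also have "\<dots> = w * (2^(d-k) * 2^k)" by simp
  also have "2^(d-k) * 2^k = (2::nat)^d" using kd by (simp add: power_add[symmetric])
  finally show ?thesis .
qed

lemma upper:
  assumes w: "w \<ge> 2" and h: "h \<ge> 1" and hd: "h \<le> 2^d"
  shows "\<exists>V E inp out. is_circuit (img h w) {T \<inter> img h w | T. T \<in> L w d} V E inp out \<and> fanin2 E
     \<and> computes_OR (img h w) {T \<inter> img h w | T. T \<in> L w d} V E inp out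
     \<and> computes_SUM (img h w) {T \<inter> img h w | T. T \<in> L w d} V E inp out
     \<and> card (gates V E) \<le> d * w * 2^d"
proof -
  have w0: "w > 0" using w by simp
  let ?N = "NN w h d"
  let ?T = "{T \<inter> img h w | T. T \<in> L w d}"
  have finN: "finite ?N" unfolding NN_def using Blk_finite by simp
  have NI: "\<forall>X\<in>?N. X \<subseteq> img h w" unfolding NN_def by (auto elim!: BlkE)
  have ne: "{} \<notin> ?N" unfolding NN_def by simp
  have sing: "\<forall>p\<in>img h w. {p} \<in> ?N"
  proof
    fix p assume p: "p \<in> img h w"
    obtain i j where ij: "p = (i,j)" "i < h" "j < w" using p unfolding img_def by auto
    have "i < 2^(d-0)" using ij hd by simp
    moreover have "{(0,j)} \<in> L w 0" using ij by auto
    ultimately have "tran w (i*2^0) 0 {(0,j)} \<inter> img h w \<in> Blk w h d 0" by (rule Blk_mem)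
    moreover have "tran w (i*2^0) 0 {(0,j)} \<inter> img h w = {p}" unfolding tran_def img_def using ij by auto
    ultimately show "{p} \<in> ?N" unfolding NN_def by auto
  qed
  have TN: "?T \<subseteq> ?N"
  proof
    fix X assume "X \<in> ?T"
    then obtain P where P: "P \<in> L w d" "X = P \<inter> img h w" by blast
    have pP: "is_pat (2^d) w P" using L_pat[OF w0 P(1)] .
    have "tran w (0*2^d) 0 P \<inter> img h w \<in> Blk w h d d" by (rule Blk_mem) (use P in auto)
    moreover have "tran w (0*2^d) 0 P = P" using tran00[OF pat_sub[OF pP]] by simp
    ultimately have XB: "X \<in> Blk w h d d" using P by simp
    have "(0, col_at P 0) \<in> X" using is_pat_col[OF pP, of 0] P(2) h unfolding img_def by auto
    then show "X \<in> ?N" unfolding NN_def using XB by auto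
  qed
  have cardN: "\<forall>X\<in>?N. card X \<le> h" unfolding NN_def using Blk_card w0 by blast
  have cardT: "\<forall>T\<in>?T. card T = h"
  proof
    fix X assume "X \<in> ?T"
    then obtain P where P: "P \<in> L w d" "X = P \<inter> img h w" by blast
    have pP: "is_pat (2^d) w P" using L_pat[OF w0 P(1)] .
    show "card X = h" using is_pat_card[OF pat_restrict[OF pP hd]] P(2) by simp
  qed
  have dec: "\<forall>X\<in>?N. 2 \<le> card X \<longrightarrow> (\<exists>Y Z. Y \<in> ?N \<and> Z \<in> ?N \<and> Y \<inter> Z = {} \<and> X = Y \<union> Z)"
  proof (intro ballI impI)
    fix X assume X: "X \<in> ?N" "2 \<le> card X"
    then obtain k where k: "k \<le> d" "X \<in> Blk w h d k" unfolding NN_def by auto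
    obtain b P where bP: "b < 2^(d-k)" "P \<in> L w k" "X = tran w (b*2^k) 0 P \<inter> img h w" by (rule BlkE[OF k(2)])
    show "\<exists>Y Z. Y \<in> ?N \<and> Z \<in> ?N \<and> Y \<inter> Z = {} \<and> X = Y \<union> Z"
      by (rule Blk_dec[OF w k(1) bP X(2)])
  qed
  obtain V E inp out where c: "is_circuit (img h w) ?T V E inp out" "fanin2 E"
    "computes_OR (img h w) ?T V E inp out" "computes_SUM (img h w) ?T V E inp out"
    "card (gates V E) = card {X\<in>?N. 2 \<le> card X}"
    using abstract_circuit[OF finN NI ne sing TN cardN cardT img_finite dec] by blast
  have "{X\<in>?N. 2 \<le> card X} \<subseteq> (\<Union>k\<in>{1..d}. Blk w h d k)"
  proof
    fix X assume X: "X \<in> {X\<in>?N. 2 \<le> card X}"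
    then obtain k where k: "k \<le> d" "X \<in> Blk w h d k" unfolding NN_def by auto
    have "k \<noteq> 0"
    proof
      assume "k = 0"
      then have "card X \<le> 1" using Blk0_card k(2) by simp
      then show False using X by simp
    qed
    then show "X \<in> (\<Union>k\<in>{1..d}. Blk w h d k)" using k by auto
  qed
  then have "card {X\<in>?N. 2 \<le> card X} \<le> card (\<Union>k\<in>{1..d}. Blk w h d k)"
    by (rule card_mono[rotated]) (simp add: Blk_finite)
  also have "\<dots> \<le> (\<Sum>k\<in>{1..d}. card (Blk w h d k))" by (rule card_UN_le) simp
  also have "\<dots> \<le> (\<Sum>k\<in>{1..d}. w * 2^d)" by (rule sum_mono) (use Blk_card_le w in simp)
  also have "\<dots> = d * w * 2^d" by simp
  finally have gb: "card (gates V E) \<le> d * w * 2^d" using c(5) by simp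
  show ?thesis by (intro exI[of _ V] exI[of _ E] exI[of _ inp] exI[of _ out] conjI c(1) c(2) c(3) c(4) gb)
qed


lemma log_up: "h \<ge> 1 \<Longrightarrow> h \<le> 2^(nat \<lceil>log 2 (real h)\<rceil>)"
proof -
  assume h: "h \<ge> 1"
  have l0: "log 2 (real h) \<ge> 0" using h by simp
  then have c0: "\<lceil>log 2 (real h)\<rceil> \<ge> 0" by simp
  have "real h = 2 powr (log 2 (real h))" using h by simp
  also have "\<dots> \<le> 2 powr (real_of_int \<lceil>log 2 (real h)\<rceil>)" by (rule powr_mono) (auto simp: le_of_int_ceiling)
  also have "real_of_int \<lceil>log 2 (real h)\<rceil> = real (nat \<lceil>log 2 (real h)\<rceil>)" using c0 by simp
  also have "(2::real) powr real (nat \<lceil>log 2 (real h)\<rceil>) = 2 ^ (nat \<lceil>log 2 (real h)\<rceil>)" by (simp add: powr_realpow)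
  finally have "real h \<le> 2 ^ (nat \<lceil>log 2 (real h)\<rceil>)" .
  then show ?thesis by (metis of_nat_le_iff of_nat_numeral of_nat_power)
qed

lemma log_low: "h \<ge> 1 \<Longrightarrow> 2^(nat \<lfloor>log 2 (real h)\<rfloor>) \<le> h"
proof -
  assume h: "h \<ge> 1"
  have l0: "log 2 (real h) \<ge> 0" using h by simp
  then have c0: "\<lfloor>log 2 (real h)\<rfloor> \<ge> 0" by simp
  have "(2::real) ^ (nat \<lfloor>log 2 (real h)\<rfloor>) = 2 powr real (nat \<lfloor>log 2 (real h)\<rfloor>)" by (simp add: powr_realpow)
  also have "real (nat \<lfloor>log 2 (real h)\<rfloor>) = real_of_int \<lfloor>log 2 (real h)\<rfloor>" using c0 by simp
  also have "(2::real) powr (real_of_int \<lfloor>log 2 (real h)\<rfloor>) \<le> 2 powr (log 2 (real h))" by (rule powr_mono) auto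
  also have "\<dots> = real h" using h by simp
  finally have "(2::real) ^ (nat \<lfloor>log 2 (real h)\<rfloor>) \<le> real h" .
  then show ?thesis by (metis of_nat_le_iff of_nat_numeral of_nat_power)
qed


lemma lower_edges:
  assumes w: "w \<ge> 2" and h: "h \<ge> 1"
    and c: "is_circuit (img h w) (FHT h w) V E inp out"
    and reach: "\<And>T p. T \<in> FHT h w \<Longrightarrow> p \<in> img h w \<Longrightarrow> (p \<in> T \<longleftrightarrow> (inp p, out T) \<in> E\<^sup>*)"
  shows "log 3 8 * (real w * real (h_low h) * log 2 (real (h_low h))) \<le> real (card E)"
proof -
  have w0: "w > 0" using w by simp
  define d where "d = nat \<lceil>log 2 (real h)\<rceil>"
  define dl where "dl = nat \<lfloor>log 2 (real h)\<rfloor>"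
  have hd: "h \<le> 2^d" unfolding d_def using log_up[OF h] .
  have hl: "2^dl \<le> h" unfolding dl_def using log_low[OF h] .
  have dld: "dl \<le> d"
  proof -
    have "(2::nat)^dl \<le> 2^d" using le_trans[OF hl hd] .
    then show ?thesis by simp
  qed
  have FHT_eq: "FHT h w = {T \<inter> img h w | T. T \<in> L w d}" unfolding FHT_def d_def by simp
  let ?B = "img (2^dl) w"
  have BI: "?B \<subseteq> img h w" using hl unfolding img_def by auto
  have ext: "\<exists>T. T \<in> FHT h w \<and> T \<inter> ?B = Q" if Q: "Q \<in> L w dl" for Q
  proof -
    obtain P where P: "P \<in> L w d" "{p \<in> P. fst p < 2^dl} = Q" using L_extend[OF w0 dld Q] by blast
    have pP: "is_pat (2^d) w P" using L_pat[OF w0 P(1)] .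
    have "P \<inter> img h w \<inter> ?B = {p \<in> P. fst p < 2^dl}"
      using hl is_pat_mem(2)[OF pP] unfolding img_def by auto
    then show ?thesis using P FHT_eq by blast
  qed
  define g where "g Q = (SOME T. T \<in> FHT h w \<and> T \<inter> ?B = Q)" for Q
  have g: "g Q \<in> FHT h w" "g Q \<inter> ?B = Q" if "Q \<in> L w dl" for Q
    using someI_ex[OF ext[OF that]] unfolding g_def by auto
  have ginj: "inj_on g (L w dl)"
  proof (rule inj_onI)
    fix Q Q' assume "Q \<in> L w dl" "Q' \<in> L w dl" "g Q = g Q'"
    then show "Q = Q'" using g by metis
  qed
  define Ts where "Ts = g ` L w dl"
  have TsT: "Ts \<subseteq> FHT h w" unfolding Ts_def using g by blast
  have finTs: "finite Ts" unfolding Ts_def using L_finite by simp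
  have cardTs: "card Ts = w * 2^dl" unfolding Ts_def using card_image[OF ginj] L_card[OF w] by simp
  have TI: "T \<subseteq> img h w" if "T \<in> FHT h w" for T using that unfolding FHT_def by auto
  have mT: "card (T \<inter> ?B) = 2^dl" if TT: "T \<in> Ts" for T
  proof -
    obtain Q where Q: "Q \<in> L w dl" "T = g Q" using TT unfolding Ts_def by blast
    then have "T \<inter> ?B = Q" using g by simp
    then show ?thesis using is_pat_card[OF L_pat[OF w0 Q(1)]] by simp
  qed
  have cnt: "card {T \<in> Ts. S \<subseteq> T} * card (S \<inter> ?B) \<le> 2^dl"
    if SS: "S \<subseteq> img h w" "S \<inter> ?B \<noteq> {}" for S
  proof -
    have "{T \<in> Ts. S \<subseteq> T} \<subseteq> g ` {Q \<in> L w dl. S \<inter> ?B \<subseteq> Q}"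
    proof
      fix T assume "T \<in> {T \<in> Ts. S \<subseteq> T}"
      then obtain Q where Q: "Q \<in> L w dl" "T = g Q" "S \<subseteq> T" unfolding Ts_def by blast
      then have "S \<inter> ?B \<subseteq> Q" using g(2)[OF Q(1)] by blast
      then show "T \<in> g ` {Q \<in> L w dl. S \<inter> ?B \<subseteq> Q}" using Q by blast
    qed
    then have "card {T \<in> Ts. S \<subseteq> T} \<le> card (g ` {Q \<in> L w dl. S \<inter> ?B \<subseteq> Q})"
      by (rule card_mono[rotated]) (simp add: L_finite)
    also have "\<dots> \<le> card {Q \<in> L w dl. S \<inter> ?B \<subseteq> Q}" by (rule card_image_le) (simp add: L_finite)
    finally have "card {T \<in> Ts. S \<subseteq> T} * card (S \<inter> ?B) \<le> card {Q \<in> L w dl. S \<inter> ?B \<subseteq> Q} * card (S \<inter> ?B)"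
      by (rule mult_le_mono1)
    also have "\<dots> \<le> 2^dl" by (rule KL[OF w SS(2)])
    finally show ?thesis .
  qed
  have m1: "(2::nat)^dl \<ge> 1" by simp
  have main: "real (card Ts) * (3 * real (2^dl) * ln (real (2^dl)) / ln 3) \<le> real (2^dl) * real (card E)"
    by (rule edge_lb[OF c reach img_finite TI TsT finTs mT m1 cnt])
  have hlow: "h_low h = 2^dl" unfolding h_low_def dl_def ..
  have lg: "log 2 (real (2^dl)) = real dl" by simp
  have ln2: "ln (real ((2::nat)^dl)) = real dl * ln 2" by (simp add: ln_realpow)
  have l38: "log 3 8 = 3 * ln 2 / ln 3"
  proof -
    have l8: "ln (8::real) = 3 * ln 2" using ln_realpow[of "2::real" 3] by simp
    show ?thesis unfolding log_def l8 by simp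
  qed
  have "log 3 8 * (real w * real (h_low h) * log 2 (real (h_low h)))
      = real (w * 2^dl) * (3 * real dl * ln 2 / ln 3)"
    unfolding hlow lg l38 by simp
  also have "\<dots> = real (card Ts) * (3 * real (2^dl) * ln (real (2^dl)) / ln 3) / real (2^dl)"
    unfolding cardTs ln2 by (simp add: field_simps)
  also have "\<dots> \<le> real (2^dl) * real (card E) / real (2^dl)"
    by (rule divide_right_mono[OF main]) simp
  also have "\<dots> = real (card E)" by simp
  finally show ?thesis .
qed


lemma log98: "log 9 8 = log 3 8 / 2"
proof -
  have "ln (9::real) = 2 * ln 3" using ln_realpow[of "3::real" 2] by simp
  then show ?thesis unfolding log_def by simp
qed

theorem theorem3:
  fixes h w :: nat
  assumes "w \<ge> 2" and "h \<ge> 1"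
  defines "lo \<equiv> real w * real (h_low h) * log 2 (real (h_low h))"
      and "hi \<equiv> real w * real (h_up h) * log 2 (real (h_up h))"
  shows "log 3 8 * lo \<le> real (OR_cx (img h w) (FHT h w)) \<and>
         real (OR_cx (img h w) (FHT h w)) \<le> 2 * hi \<and>
         log 3 8 * lo \<le> real (SUM_cx (img h w) (FHT h w)) \<and>
         real (SUM_cx (img h w) (FHT h w)) \<le> 2 * hi \<and>
         log 9 8 * lo \<le> real (OR2_cx (img h w) (FHT h w)) \<and>
         real (OR2_cx (img h w) (FHT h w)) \<le> hi \<and>
         log 9 8 * lo \<le> real (SUM2_cx (img h w) (FHT h w)) \<and>
         real (SUM2_cx (img h w) (FHT h w)) \<le> hi"
proof -
  note w = assms(1) and h = assms(2)
  let ?I = "img h w"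
  let ?T = "FHT h w"
  define d where "d = nat \<lceil>log 2 (real h)\<rceil>"
  have hd: "h \<le> 2^d" unfolding d_def using log_up[OF h] .
  have FHT_eq: "FHT h w = {T \<inter> img h w | T. T \<in> L w d}" unfolding FHT_def d_def by simp
  have hup: "h_up h = 2^d" unfolding h_up_def d_def ..
  have hi_eq: "hi = real (d * w * 2^d)" unfolding hi_def hup by simp
  obtain V E inp out where c: "is_circuit ?I ?T V E inp out" "fanin2 E"
    "computes_OR ?I ?T V E inp out" "computes_SUM ?I ?T V E inp out" "card (gates V E) \<le> d * w * 2^d"
    using upper[OF w h hd] unfolding FHT_eq[symmetric] by blast
  have cE: "card E \<le> 2 * card (gates V E)" using fanin2_card[OF circD(2)[OF c(1)] circD(1)[OF c(1)] c(2)] .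
  have TI: "T \<subseteq> ?I" if "T \<in> ?T" for T using that unfolding FHT_def by auto
  have TF: "finite T" if "T \<in> ?T" for T using TI[OF that] img_finite finite_subset by blast
  have exOR: "\<exists>n. \<exists>V E inp out. is_circuit ?I ?T V E inp out \<and> computes_OR ?I ?T V E inp out \<and> card E = n"
    using c by blast
  have OR_up: "OR_cx ?I ?T \<le> card E" unfolding OR_cx_def
    by (rule Least_le) (use c in blast)
  obtain V1 E1 inp1 out1 where c1: "is_circuit ?I ?T V1 E1 inp1 out1" "computes_OR ?I ?T V1 E1 inp1 out1"
    "card E1 = OR_cx ?I ?T"
    using LeastI_ex[OF exOR] unfolding OR_cx_def by blast
  have OR_lo: "log 3 8 * lo \<le> real (OR_cx ?I ?T)"
    unfolding lo_def using lower_edges[OF w h c1(1) reach_OR[OF c1(1) c1(2) _ TI]] c1(3) by simp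
  have exSUM: "\<exists>n. \<exists>V E inp out. is_circuit ?I ?T V E inp out \<and> computes_SUM ?I ?T V E inp out \<and> card E = n"
    using c by blast
  have SUM_up: "SUM_cx ?I ?T \<le> card E" unfolding SUM_cx_def
    by (rule Least_le) (use c in blast)
  obtain V2 E2 inp2 out2 where c2: "is_circuit ?I ?T V2 E2 inp2 out2" "computes_SUM ?I ?T V2 E2 inp2 out2"
    "card E2 = SUM_cx ?I ?T"
    using LeastI_ex[OF exSUM] unfolding SUM_cx_def by blast
  have SUM_lo: "log 3 8 * lo \<le> real (SUM_cx ?I ?T)"
    unfolding lo_def using lower_edges[OF w h c2(1) reach_SUM[OF c2(1) c2(2) _ TF TI]] c2(3) by simp
  have exOR2: "\<exists>n. \<exists>V E inp out. is_circuit ?I ?T V E inp out \<and> fanin2 E \<and> computes_OR ?I ?T V E inp out \<and> card (gates V E) = n"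
    using c by blast
  have OR2_up: "OR2_cx ?I ?T \<le> card (gates V E)" unfolding OR2_cx_def
    by (rule Least_le) (use c in blast)
  obtain V3 E3 inp3 out3 where c3: "is_circuit ?I ?T V3 E3 inp3 out3" "fanin2 E3" "computes_OR ?I ?T V3 E3 inp3 out3"
    "card (gates V3 E3) = OR2_cx ?I ?T"
    using LeastI_ex[OF exOR2] unfolding OR2_cx_def by blast
  have "log 3 8 * lo \<le> real (card E3)"
    unfolding lo_def using lower_edges[OF w h c3(1) reach_OR[OF c3(1) c3(3) _ TI]] by simp
  moreover have "card E3 \<le> 2 * OR2_cx ?I ?T"
    using fanin2_card[OF circD(2)[OF c3(1)] circD(1)[OF c3(1)] c3(2)] c3(4) by simp
  ultimately have a: "log 3 8 * lo \<le> real (card E3)" "real (card E3) \<le> 2 * real (OR2_cx ?I ?T)"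
    by simp_all
  have "log 9 8 * lo = (log 3 8 * lo) / 2" unfolding log98 by simp
  then have OR2_lo: "log 9 8 * lo \<le> real (OR2_cx ?I ?T)" using a by linarith
  have exSUM2: "\<exists>n. \<exists>V E inp out. is_circuit ?I ?T V E inp out \<and> fanin2 E \<and> computes_SUM ?I ?T V E inp out \<and> card (gates V E) = n"
    using c by blast
  have SUM2_up: "SUM2_cx ?I ?T \<le> card (gates V E)" unfolding SUM2_cx_def
    by (rule Least_le) (use c in blast)
  obtain V4 E4 inp4 out4 where c4: "is_circuit ?I ?T V4 E4 inp4 out4" "fanin2 E4" "computes_SUM ?I ?T V4 E4 inp4 out4"
    "card (gates V4 E4) = SUM2_cx ?I ?T"
    using LeastI_ex[OF exSUM2] unfolding SUM2_cx_def by blast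
  have "log 3 8 * lo \<le> real (card E4)"
    unfolding lo_def using lower_edges[OF w h c4(1) reach_SUM[OF c4(1) c4(3) _ TF TI]] by simp
  moreover have "card E4 \<le> 2 * SUM2_cx ?I ?T"
    using fanin2_card[OF circD(2)[OF c4(1)] circD(1)[OF c4(1)] c4(2)] c4(4) by simp
  ultimately have a: "log 3 8 * lo \<le> real (card E4)" "real (card E4) \<le> 2 * real (SUM2_cx ?I ?T)"
    by simp_all
  have "log 9 8 * lo = (log 3 8 * lo) / 2" unfolding log98 by simp
  then have SUM2_lo: "log 9 8 * lo \<le> real (SUM2_cx ?I ?T)" using a by linarith
  have "OR_cx ?I ?T \<le> 2 * (d * w * 2^d)" using OR_up cE c(5) by linarith
  then have OR_hi: "real (OR_cx ?I ?T) \<le> 2 * hi" unfolding hi_eq by (metis of_nat_le_iff of_nat_mult of_nat_numeral)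
  have "SUM_cx ?I ?T \<le> 2 * (d * w * 2^d)" using SUM_up cE c(5) by linarith
  then have SUM_hi: "real (SUM_cx ?I ?T) \<le> 2 * hi" unfolding hi_eq by (metis of_nat_le_iff of_nat_mult of_nat_numeral)
  have "OR2_cx ?I ?T \<le> d * w * 2^d" using OR2_up c(5) by linarith
  then have OR2_hi: "real (OR2_cx ?I ?T) \<le> hi" unfolding hi_eq by (simp only: of_nat_le_iff)
  have "SUM2_cx ?I ?T \<le> d * w * 2^d" using SUM2_up c(5) by linarith
  then have SUM2_hi: "real (SUM2_cx ?I ?T) \<le> hi" unfolding hi_eq by (simp only: of_nat_le_iff)
  show ?thesis using OR_lo OR_hi SUM_lo SUM_hi OR2_lo OR2_hi SUM2_lo SUM2_hi by blast
qed


end
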